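(* For $r\ge2$, the moduli space $\mathscr{M}^{[r,1]}_{0,r+1}$ consists of a single point.
   Context: Let $\mu=\left(\tfrac{r-1}{2r},-\tfrac{1}{2r},\dots,-\tfrac{1}{2r}\right)$ and let $\mathcal{C}_\mu\subset\mathrm{SU}(r)$ be the conjugacy class of $\operatorname{diag}(e^{2\pi i\mu_1},\dots,e^{2\pi i\mu_r})$ (so $\mathcal{C}_\mu\cong\mathbb{CP}^{r-1}$). For a genus $g$ surface with $r+1$ marked points, $\mathscr{M}^{[r,1]}_{g,r+1}=\{(A_1,\dots,A_g,B_1,\dots,B_g,C_1,\dots,C_{r+1})\in\mathrm{SU}(r)^{2g}\times\mathcal{C}_\mu^{r+1}:\prod_j[A_j,B_j]\prod_kC_k=I\}/\mathrm{conjugation}$. In particular $\mathscr{M}^{[r,1]}_{0,r+1}=\{(C_1,\dots,C_{r+1})\in\mathcal{C}_\mu^{r+1}:C_1\cdots C_{r+1}=I\}/\mathrm{SU}(r)$. *)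

theory Defs
  imports Complex_Main "Jordan_Normal_Form.Matrix" "Jordan_Normal_Form.Determinant"
begin

definition adj :: "complex mat \<Rightarrow> complex mat" where
  "adj A = mat (dim_col A) (dim_row A) (\<lambda>(i,j). cnj (A $$ (j,i)))"

definition SU :: "nat \<Rightarrow> complex mat set" where
  "SU r = {U. U \<in> carrier_mat r r \<and> U * adj U = 1\<^sub>m r \<and> det U = 1}"

definition mu :: "nat \<Rightarrow> nat \<Rightarrow> real" where
  "mu r k = (if k = 0 then (real r - 1) / (2 * real r) else - 1 / (2 * real r))"

definition Dmu :: "nat \<Rightarrow> complex mat" where
  "Dmu r = mat_diag r (\<lambda>k. exp (2 * pi * \<i> * complex_of_real (mu r k)))"

definition conj_class :: "nat \<Rightarrow> complex mat set" where
  "conj_class r = {U * Dmu r * adj U | U. U \<in> SU r}"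

definition tuples :: "nat \<Rightarrow> complex mat list set" where
  "tuples r = {Cs. length Cs = r + 1 \<and> set Cs \<subseteq> conj_class r
                  \<and> foldr (*) Cs (1\<^sub>m r) = 1\<^sub>m r}"

definition simconj :: "nat \<Rightarrow> (complex mat list \<times> complex mat list) set" where
  "simconj r = {(Cs, Ds). Cs \<in> tuples r \<and> Ds \<in> tuples r \<and>
                  (\<exists>U \<in> SU r. Ds = map (\<lambda>C. U * C * adj U) Cs)}"

definition moduli0 :: "nat \<Rightarrow> complex mat list set set" where
  "moduli0 r = tuples r // simconj r"

end

theory Submission
  imports Defs "Jordan_Normal_Form.Ring_Hom_Matrix"
begin


definition eta :: "nat \<Rightarrow> complex" where "eta r = cis (pi / real r)"

lemma eta_cnj: "cnj (eta r) * eta r = 1"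
  unfolding eta_def by (simp add: cis_cnj cis_mult)

lemma eta_cnj': "eta r * cnj (eta r) = 1"
  using eta_cnj[of r] by (simp add: mult.commute)

lemma eta_pow: assumes "r > 0" shows "eta r ^ r = -1"
  using assms unfolding eta_def by (simp add: DeMoivre)

lemma eta_Im: assumes "r \<ge> 2" shows "Im (eta r) > 0"
proof -
  have "0 < pi / real r" using assms by simp
  moreover have "pi / real r < pi" using assms by (simp add: field_simps)
  ultimately show ?thesis unfolding eta_def by (simp add: sin_gt_zero)
qed

lemma eta_ne: assumes "r \<ge> 2" shows "eta r \<noteq> 1" "eta r \<noteq> -1"
  using eta_Im[OF assms] by auto

lemma exp_mu: assumes "r \<ge> 1"
  shows "exp (2 * complex_of_real pi * \<i> * complex_of_real (mu r k)) = (if k = 0 then - cnj (eta r) else cnj (eta r))"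
proof -
  have e: "exp (2 * complex_of_real pi * \<i> * complex_of_real x) = cis (2 * pi * x)" for x
    by (simp add: cis_conv_exp mult.commute mult.left_commute)
  show ?thesis
  proof (cases "k = 0")
    case True
    have "2 * pi * mu r k = pi + (- (pi / real r))" using True assms
      by (simp add: mu_def field_simps)
    moreover have "cis (pi - pi / real r) = cis pi * cis (- (pi / real r))"
      by (simp only: cis_mult diff_conv_add_uminus)
    ultimately show ?thesis using True unfolding e eta_def
      by (simp add: cis_cnj)
  next
    case False
    have "2 * pi * mu r k = - (pi / real r)" using False assms
      by (simp add: mu_def field_simps)
    then show ?thesis using False unfolding e eta_def
      by (simp add: cis_cnj)
  qed
qed


definition ip :: "nat \<Rightarrow> (nat \<Rightarrow> complex) \<Rightarrow> (nat \<Rightarrow> complex) \<Rightarrow> complex" where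
  "ip n u v = (\<Sum>a<n. cnj (u a) * v a)"

definition Rm :: "nat \<Rightarrow> (nat \<Rightarrow> complex) \<Rightarrow> complex mat" where
  "Rm n u = mat n n (\<lambda>(a,b). (if a = b then 1 else 0) - 2 * u a * cnj (u b))"

definition unitary :: "nat \<Rightarrow> complex mat \<Rightarrow> bool" where
  "unitary n X \<longleftrightarrow> X \<in> carrier_mat n n \<and> X * adj X = 1\<^sub>m n"

definition mv :: "nat \<Rightarrow> complex mat \<Rightarrow> (nat \<Rightarrow> complex) \<Rightarrow> (nat \<Rightarrow> complex)" where
  "mv n X u = (\<lambda>a. \<Sum>b<n. X $$ (a,b) * u b)"

lemma adj_carrier[simp]: "X \<in> carrier_mat n m \<Longrightarrow> adj X \<in> carrier_mat m n"
  unfolding adj_def by auto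

lemma adj_dim[simp]: "dim_row (adj X) = dim_col X" "dim_col (adj X) = dim_row X"
  unfolding adj_def by auto

lemma adj_index[simp]: "X \<in> carrier_mat n m \<Longrightarrow> i < m \<Longrightarrow> j < n \<Longrightarrow> adj X $$ (i,j) = cnj (X $$ (j,i))"
  unfolding adj_def by auto

lemma Rm_carrier[simp]: "Rm n u \<in> carrier_mat n n" unfolding Rm_def by auto

lemma Rm_dim[simp]: "dim_row (Rm n u) = n" "dim_col (Rm n u) = n" unfolding Rm_def by auto

lemma Rm_index[simp]: "a < n \<Longrightarrow> b < n \<Longrightarrow> Rm n u $$ (a,b) = (if a = b then 1 else 0) - 2 * u a * cnj (u b)"
  unfolding Rm_def by auto

lemma mult_entry: assumes "A \<in> carrier_mat n k" "B \<in> carrier_mat k m" "i < n" "j < m"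
  shows "(A * B) $$ (i,j) = (\<Sum>e<k. A $$ (i,e) * B $$ (e,j))"
  using assms by (auto simp: scalar_prod_def lessThan_atLeast0 intro!: sum.cong)

lemma unitary_carrier: "unitary n X \<Longrightarrow> X \<in> carrier_mat n n" unfolding unitary_def by auto

lemma unitary_left: assumes "unitary n X" shows "adj X * X = 1\<^sub>m n"
  using assms unfolding unitary_def
  by (intro mat_mult_left_right_inverse[of X n]) auto

lemma unitary_rows: assumes "unitary n X" "a < n" "b < n"
  shows "(\<Sum>f<n. X $$ (a,f) * cnj (X $$ (b,f))) = (if a = b then 1 else 0)"
proof -
  have X: "X \<in> carrier_mat n n" using assms unitary_carrier by auto
  have "(X * adj X) $$ (a,b) = (if a = b then 1 else 0)" using assms unfolding unitary_def by auto
  moreover have "(X * adj X) $$ (a,b) = (\<Sum>f<n. X $$ (a,f) * adj X $$ (f,b))"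
    by (rule mult_entry[OF X adj_carrier[OF X] assms(2,3)])
  ultimately show ?thesis using X assms by (simp add: adj_index[OF X])
qed

lemma unitary_cols: assumes "unitary n X" "b < n" "c < n"
  shows "(\<Sum>a<n. cnj (X $$ (a,b)) * X $$ (a,c)) = (if b = c then 1 else 0)"
proof -
  have X: "X \<in> carrier_mat n n" using assms unitary_carrier by auto
  have "(adj X * X) $$ (b,c) = (if b = c then 1 else 0)" using assms unitary_left by auto
  moreover have "(adj X * X) $$ (b,c) = (\<Sum>a<n. adj X $$ (b,a) * X $$ (a,c))"
    by (rule mult_entry[OF adj_carrier[OF X] X assms(2,3)])
  ultimately show ?thesis using X assms by (simp add: adj_index[OF X])
qed

lemma conj_Rm: assumes "unitary n X"
  shows "X * Rm n u * adj X = Rm n (mv n X u)"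
proof -
  have X: "X \<in> carrier_mat n n" using assms unitary_carrier by auto
  show ?thesis
  proof (rule eq_matI)
    fix a b assume ab: "a < dim_row (Rm n (mv n X u))" "b < dim_col (Rm n (mv n X u))"
    then have a: "a < n" and b: "b < n" by auto
    have XR: "X * Rm n u \<in> carrier_mat n n" using X by auto
    have "(X * Rm n u * adj X) $$ (a,b) = (\<Sum>f<n. (X * Rm n u) $$ (a,f) * adj X $$ (f,b))"
      by (rule mult_entry[OF XR adj_carrier[OF X] a b])
    also have "\<dots> = (\<Sum>f<n. (\<Sum>e<n. X $$ (a,e) * Rm n u $$ (e,f)) * cnj (X $$ (b,f)))"
      by (rule sum.cong[OF refl], subst mult_entry[OF X Rm_carrier a], auto simp: adj_index[OF X] b)
    also have "\<dots> = (\<Sum>f<n. (X $$ (a,f) - 2 * mv n X u a * cnj (u f)) * cnj (X $$ (b,f)))"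
    proof (rule sum.cong[OF refl])
      fix f assume f: "f \<in> {..<n}"
      have "(\<Sum>e<n. X $$ (a,e) * Rm n u $$ (e,f)) = (\<Sum>e<n. X $$ (a,e) * (if e = f then 1 else 0) - 2 * (X $$ (a,e) * u e) * cnj (u f))"
        using f by (intro sum.cong) (auto simp: algebra_simps)
      also have "\<dots> = (\<Sum>e<n. X $$ (a,e) * (if e = f then 1 else 0)) - (\<Sum>e<n. 2 * (X $$ (a,e) * u e) * cnj (u f))"
        by (rule sum_subtractf)
      also have "\<dots> = X $$ (a,f) - 2 * mv n X u a * cnj (u f)"
        using f by (simp add: mv_def sum_distrib_left sum_distrib_right if_distrib cong: if_cong)
      finally show "(\<Sum>e<n. X $$ (a,e) * Rm n u $$ (e,f)) * cnj (X $$ (b,f)) = (X $$ (a,f) - 2 * mv n X u a * cnj (u f)) * cnj (X $$ (b,f))"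
        by simp
    qed
    also have "\<dots> = (\<Sum>f<n. X $$ (a,f) * cnj (X $$ (b,f))) - (\<Sum>f<n. 2 * mv n X u a * cnj (X $$ (b,f) * u f))"
      by (simp add: algebra_simps sum_subtractf)
    also have "\<dots> = (\<Sum>f<n. X $$ (a,f) * cnj (X $$ (b,f))) - 2 * mv n X u a * cnj (\<Sum>f<n. X $$ (b,f) * u f)"
      by (simp add: sum_distrib_left)
    also have "\<dots> = Rm n (mv n X u) $$ (a,b)"
      using a b unitary_rows[OF assms a b] by (simp add: mv_def)
    finally show "(X * Rm n u * adj X) $$ (a,b) = Rm n (mv n X u) $$ (a,b)" .
  qed (use X in auto)
qed

lemma ip_mv: assumes "unitary n X"
  shows "ip n (mv n X u) (mv n X v) = ip n u v"
proof -
  have "ip n (mv n X u) (mv n X v) = (\<Sum>a<n. (\<Sum>b<n. cnj (X $$ (a,b)) * cnj (u b)) * (\<Sum>c<n. X $$ (a,c) * v c))"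
    by (simp add: ip_def mv_def)
  also have "\<dots> = (\<Sum>a<n. \<Sum>b<n. \<Sum>c<n. cnj (u b) * v c * (cnj (X $$ (a,b)) * X $$ (a,c)))"
    by (simp only: sum_product) (simp add: algebra_simps)
  also have "\<dots> = (\<Sum>b<n. \<Sum>a<n. \<Sum>c<n. cnj (u b) * v c * (cnj (X $$ (a,b)) * X $$ (a,c)))"
    by (rule sum.swap)
  also have "\<dots> = (\<Sum>b<n. \<Sum>c<n. \<Sum>a<n. cnj (u b) * v c * (cnj (X $$ (a,b)) * X $$ (a,c)))"
    by (rule sum.cong[OF refl], rule sum.swap)
  also have "\<dots> = (\<Sum>b<n. \<Sum>c<n. cnj (u b) * v c * (\<Sum>a<n. cnj (X $$ (a,b)) * X $$ (a,c)))"
    by (simp only: sum_distrib_left)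
  also have "\<dots> = (\<Sum>b<n. \<Sum>c<n. cnj (u b) * v c * (if b = c then 1 else 0))"
    by (intro sum.cong refl) (simp add: unitary_cols[OF assms])
  also have "\<dots> = ip n u v" by (simp add: ip_def if_distrib cong: if_cong)
  finally show ?thesis .
qed

definition e0 :: "nat \<Rightarrow> complex" where "e0 a = (if a = 0 then 1 else 0)"

lemma Dmu_eq: assumes "r \<ge> 1" shows "Dmu r = cnj (eta r) \<cdot>\<^sub>m Rm r e0"
  by (rule eq_matI) (auto simp: Dmu_def mat_diag_def exp_mu[OF assms] e0_def)

lemma mv_e0: "0 < n \<Longrightarrow> mv n X e0 = (\<lambda>a. X $$ (a,0))"
  by (auto simp: mv_def e0_def if_distrib cong: if_cong)


lemma cnj_hom: "comm_ring_hom cnj" by unfold_locales auto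

lemma adj_map: assumes "X \<in> carrier_mat n m" shows "adj X = map_mat cnj (transpose_mat X)"
  using assms by (intro eq_matI) (auto simp: adj_def)

lemma det_adj: assumes "X \<in> carrier_mat n n" shows "det (adj X) = cnj (det X)"
proof -
  have "det (adj X) = cnj (det (transpose_mat X))"
    unfolding adj_map[OF assms] by (rule comm_ring_hom.hom_det[OF cnj_hom])
  then show ?thesis using det_transpose[OF assms] by simp
qed

lemma unitary_det: assumes "unitary n X" shows "det X * cnj (det X) = 1"
proof -
  have X: "X \<in> carrier_mat n n" using assms unitary_carrier by auto
  have "det (X * adj X) = 1" using assms unfolding unitary_def by simp
  then show ?thesis using det_mult[OF X adj_carrier[OF X]] det_adj[OF X] by simp
qed

lemma root_unit: assumes "w * cnj w = 1" "n > 0"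
  shows "\<exists>s. s ^ n = w \<and> s * cnj s = 1"
proof -
  have "complex_of_real ((cmod w)\<^sup>2) = 1" using assms(1) complex_norm_square[of w] by simp
  then have "(cmod w)\<^sup>2 = 1" by (metis of_real_eq_1_iff)
  then have cw: "cmod w = 1" using norm_ge_zero[of w] by (auto simp: power2_eq_1_iff)
  then have w0: "w \<noteq> 0" by auto
  have sg: "sgn w = w" using cw by (simp add: sgn_eq)
  define s where "s = cis (Arg w / real n)"
  have "s ^ n = cis (Arg w)" using assms(2) by (simp add: s_def DeMoivre)
  also have "\<dots> = w" using Arg_correct[OF w0] sg by simp
  finally have "s ^ n = w" .
  moreover have "s * cnj s = 1" by (simp add: s_def cis_cnj cis_mult)
  ultimately show ?thesis by blast
qed

lemma smult_smult_mat: "a \<cdot>\<^sub>m (b \<cdot>\<^sub>m A) = (a * b) \<cdot>\<^sub>m (A :: complex mat)"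
  by (intro eq_matI) auto

lemma smult_one_mat[simp]: "1 \<cdot>\<^sub>m A = (A :: complex mat)"
  by (intro eq_matI) auto

lemma adj_smult: "adj (s \<cdot>\<^sub>m X) = cnj s \<cdot>\<^sub>m adj X"
  by (intro eq_matI) (auto simp: adj_def)

lemma SU_adjust: assumes "unitary n X" "n > 0"
  shows "\<exists>U \<in> SU n. \<forall>A \<in> carrier_mat n n. U * A * adj U = X * A * adj X"
proof -
  have X: "X \<in> carrier_mat n n" using assms unitary_carrier by auto
  have "cnj (det X) * cnj (cnj (det X)) = 1" using unitary_det[OF assms(1)] by (simp add: mult.commute)
  then obtain s where s: "s ^ n = cnj (det X)" "s * cnj s = 1" using root_unit[OF _ assms(2)] by blast
  define U where "U = s \<cdot>\<^sub>m X"
  have U: "U \<in> carrier_mat n n" using X by (simp add: U_def)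
  have gen: "U * A * adj U = X * A * adj X" if A: "A \<in> carrier_mat n n" for A
  proof -
    have "U * A * adj U = s \<cdot>\<^sub>m (X * A) * (cnj s \<cdot>\<^sub>m adj X)"
      unfolding U_def adj_smult using mult_smult_assoc_mat[OF X A] by simp
    also have "\<dots> = s \<cdot>\<^sub>m ((X * A) * (cnj s \<cdot>\<^sub>m adj X))"
      using mult_smult_assoc_mat[OF mult_carrier_mat[OF X A] smult_carrier_mat[OF adj_carrier[OF X]]] by simp
    also have "\<dots> = s \<cdot>\<^sub>m (cnj s \<cdot>\<^sub>m (X * A * adj X))"
      using mult_smult_distrib[OF mult_carrier_mat[OF X A] adj_carrier[OF X]] by simp
    also have "\<dots> = X * A * adj X" using s(2) by (simp add: smult_smult_mat)
    finally show ?thesis .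
  qed
  have "U * adj U = 1\<^sub>m n"
    using gen[of "1\<^sub>m n"] X U assms(1) unfolding unitary_def by simp
  moreover have "det U = 1"
    using X s unitary_det[OF assms(1)] by (simp add: U_def det_smult mult.commute)
  ultimately have "U \<in> SU n" using U unfolding SU_def by auto
  then show ?thesis using gen by blast
qed

lemma SU_unitary: "U \<in> SU n \<Longrightarrow> unitary n U"
  unfolding SU_def unitary_def by auto

lemma ip_e0: "n > 0 \<Longrightarrow> ip n e0 e0 = 1"
  by (simp add: ip_def e0_def if_distrib cong: if_cong)

lemma conj_class_D: assumes "r \<ge> 1" "C \<in> conj_class r"
  shows "\<exists>u. ip r u u = 1 \<and> C = cnj (eta r) \<cdot>\<^sub>m Rm r u"
proof -
  obtain U where U: "U \<in> SU r" "C = U * Dmu r * adj U" using assms(2) unfolding conj_class_def by auto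
  have Uu: "unitary r U" using SU_unitary[OF U(1)] .
  have UC: "U \<in> carrier_mat r r" using Uu unitary_carrier by auto
  have "C = U * (cnj (eta r) \<cdot>\<^sub>m Rm r e0) * adj U" using U(2) Dmu_eq[OF assms(1)] by simp
  also have "\<dots> = cnj (eta r) \<cdot>\<^sub>m (U * Rm r e0) * adj U"
    using mult_smult_distrib[OF UC Rm_carrier] by simp
  also have "\<dots> = cnj (eta r) \<cdot>\<^sub>m (U * Rm r e0 * adj U)"
    using mult_smult_assoc_mat[OF mult_carrier_mat[OF UC Rm_carrier] adj_carrier[OF UC]] by simp
  also have "\<dots> = cnj (eta r) \<cdot>\<^sub>m Rm r (mv r U e0)" using conj_Rm[OF Uu] by simp
  finally have "C = cnj (eta r) \<cdot>\<^sub>m Rm r (mv r U e0)" .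
  moreover have "ip r (mv r U e0) (mv r U e0) = 1" using ip_mv[OF Uu] ip_e0 assms(1) by simp
  ultimately show ?thesis by blast
qed


lemma delta_mult[simp]: "(if a = b then 1 else 0) * (x::complex) = (if a = b then x else 0)"
  "x * (if a = b then 1 else 0) = (if a = b then x else 0)" by auto

lemma Rm_cong: "(\<And>a. a < n \<Longrightarrow> u a = v a) \<Longrightarrow> Rm n u = Rm n v"
  by (intro eq_matI) auto

lemma Rm_phase: assumes "\<phi> * cnj \<phi> = 1" shows "Rm n (\<lambda>a. \<phi> * u a) = Rm n u"
proof (intro eq_matI)
  fix i j assume "i < dim_row (Rm n u)" "j < dim_col (Rm n u)"
  then show "Rm n (\<lambda>a. \<phi> * u a) $$ (i, j) = Rm n u $$ (i, j)"
    using assms by (simp add: algebra_simps)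
qed auto

lemma ip_self_real: "ip n u u = complex_of_real (\<Sum>a<n. (cmod (u a))\<^sup>2)"
  unfolding ip_def of_real_sum complex_norm_square by (simp add: mult.commute)

lemma sum_e0: assumes "n > 0" shows "(\<Sum>a<n. e0 a * f a) = f 0"
proof -
  have "(\<Sum>a<n. e0 a * f a) = (\<Sum>a<n. if a = 0 then f a else 0)"
    by (intro sum.cong) (auto simp: e0_def)
  then show ?thesis using assms by simp
qed

lemma sum_e0': assumes "n > 0" shows "(\<Sum>a<n. f a * e0 a) = f 0"
  using sum_e0[OF assms, of f] by (simp add: mult.commute)

lemma adj_Rm: "adj (Rm n q) = Rm n q"
  by (intro eq_matI) (auto simp: adj_def)

lemma Rm_unitary: assumes "ip n q q = 1" shows "unitary n (Rm n q)"
  unfolding unitary_def adj_Rm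
proof (intro conjI Rm_carrier eq_matI)
  fix a b assume ab: "a < dim_row (1\<^sub>m n :: complex mat)" "b < dim_col (1\<^sub>m n :: complex mat)"
  then have a: "a < n" and b: "b < n" by auto
  have "(Rm n q * Rm n q) $$ (a,b) = (\<Sum>f<n. Rm n q $$ (a,f) * Rm n q $$ (f,b))"
    by (rule mult_entry[OF Rm_carrier Rm_carrier a b])
  also have "\<dots> = (\<Sum>f<n. (if a = f then 1 else 0) * (if f = b then 1 else 0)
      - 2 * q a * ((if f = b then 1 else 0) * cnj (q f)) - 2 * cnj (q b) * ((if a = f then 1 else 0) * q f)
      + 4 * q a * cnj (q b) * (cnj (q f) * q f))"
    using a b by (intro sum.cong refl) (auto simp: algebra_simps)
  also have "\<dots> = (if a = b then 1 else 0) - 2 * q a * cnj (q b) - 2 * cnj (q b) * q a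
      + 4 * q a * cnj (q b) * ip n q q"
    using a b by (simp add: sum.distrib sum_subtractf sum_distrib_left[symmetric] ip_def)
  also have "\<dots> = (1\<^sub>m n :: complex mat) $$ (a,b)"
    using a b assms by simp
  finally show "(Rm n q * Rm n q) $$ (a,b) = (1\<^sub>m n :: complex mat) $$ (a,b)" .
qed auto


lemma cnj_e0[simp]: "cnj (e0 a) = e0 a" by (simp add: e0_def)

lemma e0_0[simp]: "e0 0 = 1" by (simp add: e0_def)

lemma mv_Rm_e0: "0 < n \<Longrightarrow> a < n \<Longrightarrow> mv n (Rm n q) e0 a = e0 a - 2 * q a * cnj (q 0)"
  by (simp add: mv_e0 e0_def)

lemma householder: assumes "n > 0" "ip n u u = 1"
  shows "\<exists>X. unitary n X \<and> Rm n (mv n X e0) = Rm n u"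
proof -
  define t where "t = cmod (u 0)"
  define \<phi> where "\<phi> = (if u 0 = 0 then 1 else cnj (u 0) / complex_of_real t)"
  have ph: "\<phi> * cnj \<phi> = 1"
  proof (cases "u 0 = 0")
    case False
    then have "t \<noteq> 0" by (simp add: t_def)
    then show ?thesis using False complex_norm_square[of "u 0"]
      by (simp add: \<phi>_def t_def field_simps power2_eq_square)
  qed (simp add: \<phi>_def)
  define v where "v a = \<phi> * u a" for a
  have Rv: "Rm n v = Rm n u" unfolding v_def by (rule Rm_phase[OF ph])
  have v0: "v 0 = complex_of_real t"
  proof (cases "u 0 = 0")
    case False
    then have "t \<noteq> 0" by (simp add: t_def)
    then show ?thesis using False complex_norm_square[of "u 0"]
      by (simp add: v_def \<phi>_def t_def field_simps power2_eq_square)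
  qed (simp add: v_def \<phi>_def t_def)
  have cv: "cmod (v a) = cmod (u a)" for a
  proof -
    have "complex_of_real ((cmod \<phi>)\<^sup>2) = 1" using ph complex_norm_square[of \<phi>] by simp
    then have "(cmod \<phi>)\<^sup>2 = 1" by (metis of_real_eq_1_iff)
    then have "cmod \<phi> = 1" using norm_ge_zero[of \<phi>] by (auto simp: power2_eq_1_iff)
    then show ?thesis by (simp add: v_def norm_mult)
  qed
  have sumv: "(\<Sum>a<n. (cmod (v a))\<^sup>2) = 1"
    using assms(2) unfolding ip_self_real cv by (metis of_real_eq_1_iff)
  have ipv: "ip n v v = 1" using sumv by (simp add: ip_self_real)
  have t0: "t \<ge> 0" by (simp add: t_def)
  have "(\<Sum>a<n. (cmod (v a))\<^sup>2) = (cmod (v 0))\<^sup>2 + (\<Sum>a\<in>{..<n} - {0}. (cmod (v a))\<^sup>2)"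
    using assms(1) by (simp add: sum.remove)
  then have rest: "(\<Sum>a\<in>{..<n} - {0}. (cmod (v a))\<^sup>2) = 1 - t\<^sup>2" using sumv v0 t0 by simp
  have tle: "t\<^sup>2 \<le> 1" using rest sum_nonneg[of "{..<n} - {0}" "\<lambda>a. (cmod (v a))\<^sup>2"] by simp
  show ?thesis
  proof (cases "t = 1")
    case True
    then have "(\<Sum>a\<in>{..<n} - {0}. (cmod (v a))\<^sup>2) = 0" using rest by simp
    then have vz: "v a = 0" if "a < n" "a \<noteq> 0" for a
      using sum_nonneg_eq_0_iff[of "{..<n} - {0}" "\<lambda>a. (cmod (v a))\<^sup>2"] that by auto
    have "mv n (1\<^sub>m n) e0 a = v a" if "a < n" for a
      using that vz v0 True assms(1) by (simp add: mv_e0 e0_def)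
    then have "Rm n (mv n (1\<^sub>m n) e0) = Rm n u" using Rv Rm_cong by metis
    moreover have "unitary n (1\<^sub>m n)" unfolding unitary_def
      by (auto intro!: eq_matI simp: adj_def)
    ultimately show ?thesis by blast
  next
    case False
    have tlt: "t < 1" using tle t0 False by (smt (verit) one_le_power power2_eq_1_iff)
    define w where "w a = e0 a - v a" for a
    have ipw: "ip n w w = complex_of_real (2 - 2 * t)"
    proof -
      have "ip n w w = (\<Sum>a<n. e0 a * e0 a) - (\<Sum>a<n. e0 a * v a) - (\<Sum>a<n. cnj (v a) * e0 a) + ip n v v"
        unfolding ip_def w_def by (simp add: algebra_simps sum.distrib sum_subtractf cnj_e0)
      also have "\<dots> = complex_of_real (2 - 2 * t)"
        using assms(1) ipv v0 by (simp add: sum_e0 sum_e0')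
      finally show ?thesis .
    qed
    define q where "q a = w a / complex_of_real (sqrt (2 - 2 * t))" for a
    have pos: "2 - 2 * t > 0" using tlt by simp
    have ipq: "ip n q q = 1"
    proof -
      have "ip n q q = ip n w w / complex_of_real (2 - 2 * t)"
        using pos unfolding ip_def q_def
        by (simp add: sum_divide_distrib[symmetric] power2_eq_square[symmetric] of_real_power[symmetric])
      then show ?thesis using ipw pos by simp
    qed
    have mvq: "mv n (Rm n q) e0 a = v a" if "a < n" for a
    proof -
      have "mv n (Rm n q) e0 a = e0 a - 2 * q a * cnj (q 0)" using mv_Rm_e0[OF assms(1) that] .
      also have "\<dots> = e0 a - w a * (2 * cnj (w 0) / complex_of_real (2 - 2 * t))"
        using pos unfolding q_def
        by (simp add: field_simps power2_eq_square[symmetric] of_real_power[symmetric])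
      also have "cnj (w 0) = complex_of_real (1 - t)" using v0 by (simp add: w_def e0_def)
      also have "2 * complex_of_real (1 - t) / complex_of_real (2 - 2 * t) = 1"
        using pos by (simp add: field_simps)
      finally show ?thesis by (simp add: w_def)
    qed
    then have "Rm n (mv n (Rm n q) e0) = Rm n u" using Rv Rm_cong by metis
    then show ?thesis using Rm_unitary[OF ipq] by blast
  qed
qed

lemma conj_class_I: assumes "r \<ge> 1" "ip r u u = 1"
  shows "cnj (eta r) \<cdot>\<^sub>m Rm r u \<in> conj_class r"
proof -
  obtain X where X: "unitary r X" "Rm r (mv r X e0) = Rm r u" using householder[of r u] assms by auto
  obtain U where U: "U \<in> SU r" "\<forall>A \<in> carrier_mat r r. U * A * adj U = X * A * adj X"
    using SU_adjust[OF X(1)] assms(1) by auto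
  have XC: "X \<in> carrier_mat r r" using X(1) unitary_carrier by auto
  have "U * Dmu r * adj U = X * Dmu r * adj X" using U(2) by (simp add: Dmu_def)
  also have "\<dots> = X * (cnj (eta r) \<cdot>\<^sub>m Rm r e0) * adj X" using Dmu_eq[OF assms(1)] by simp
  also have "\<dots> = cnj (eta r) \<cdot>\<^sub>m (X * Rm r e0) * adj X"
    using mult_smult_distrib[OF XC Rm_carrier] by simp
  also have "\<dots> = cnj (eta r) \<cdot>\<^sub>m (X * Rm r e0 * adj X)"
    using mult_smult_assoc_mat[OF mult_carrier_mat[OF XC Rm_carrier] adj_carrier[OF XC]] by simp
  also have "\<dots> = cnj (eta r) \<cdot>\<^sub>m Rm r u" using conj_Rm[OF X(1)] X(2) by simp
  finally have eq: "U * Dmu r * adj U = cnj (eta r) \<cdot>\<^sub>m Rm r u" .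
  show ?thesis unfolding conj_class_def using U(1) eq[symmetric] by blast
qed


fun ysl :: "nat \<Rightarrow> (nat \<Rightarrow> complex) list \<Rightarrow> (nat \<Rightarrow> complex) list" where
  "ysl n [] = []"
| "ysl n (u # us) = (let t = ysl n us in (\<lambda>a. u a - 2 * (\<Sum>j<length us. ip n (us!j) u * (t!j) a)) # t)"

definition prodR :: "nat \<Rightarrow> (nat \<Rightarrow> complex) list \<Rightarrow> complex mat" where
  "prodR n us = foldr (\<lambda>u A. Rm n u * A) us (1\<^sub>m n)"

lemma length_ysl[simp]: "length (ysl n us) = length us"
  by (induction us) (auto simp: Let_def)

lemma prodR_carrier[simp]: "prodR n us \<in> carrier_mat n n"
  by (induction us) (auto simp: prodR_def)

lemma prodR_Cons: "prodR n (u # us) = Rm n u * prodR n us"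
  by (simp add: prodR_def)

lemma cnj_ip: "cnj (ip n u v) = ip n v u"
  by (simp add: ip_def cnj_sum mult.commute)

lemma ysl_Cons0: "ysl n (u # us) ! 0 = (\<lambda>a. u a - 2 * (\<Sum>j<length us. ip n (us!j) u * (ysl n us ! j) a))"
  by (simp add: Let_def)

lemma ysl_Cons_Suc: "ysl n (u # us) ! Suc j = ysl n us ! j"
  by (simp add: Let_def)

lemma aux_lin: "(d::complex) - 2*s - 2*x*c + 4*x*z = d - 2*(x*(c - 2*z) + s)"
  by (simp add: algebra_simps)

lemma prodR_entry: assumes "a < n" "b < n"
  shows "prodR n us $$ (a,b) = (if a = b then 1 else 0) - 2 * (\<Sum>j<length us. (us!j) a * cnj ((ysl n us ! j) b))"
  using assms
proof (induction us arbitrary: a b)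
  case Nil
  then show ?case by (simp add: prodR_def)
next
  case (Cons u us)
  define L where "L = length us"
  define S where "S e = (\<Sum>j<L. (us!j) e * cnj ((ysl n us ! j) b))" for e
  define y where "y = ysl n us"
  have IH: "prodR n us $$ (e,b) = (if e = b then 1 else 0) - 2 * S e" if "e < n" for e
    using Cons.IH[OF that Cons.prems(2)] by (simp add: S_def L_def)
  have "prodR n (u # us) $$ (a,b) = (\<Sum>e<n. Rm n u $$ (a,e) * prodR n us $$ (e,b))"
    unfolding prodR_Cons by (rule mult_entry[OF Rm_carrier prodR_carrier Cons.prems])
  also have "\<dots> = (\<Sum>e<n. ((if a = e then 1 else 0) - 2 * u a * cnj (u e)) * ((if e = b then 1 else 0) - 2 * S e))"
    using Cons.prems by (intro sum.cong refl) (simp add: IH)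
  also have "\<dots> = (\<Sum>e<n. (if a = e then 1 else 0) * (if e = b then 1 else 0))
      - 2 * (\<Sum>e<n. (if a = e then 1 else 0) * S e) - 2 * u a * (\<Sum>e<n. cnj (u e) * (if e = b then 1 else 0))
      + 4 * u a * (\<Sum>e<n. cnj (u e) * S e)"
    by (simp add: algebra_simps sum.distrib sum_subtractf sum_distrib_left del: delta_mult)
  also have "\<dots> = (if a = b then 1 else 0) - 2 * S a - 2 * u a * cnj (u b) + 4 * u a * (\<Sum>e<n. cnj (u e) * S e)"
    using Cons.prems by simp
  also have "(\<Sum>e<n. cnj (u e) * S e) = (\<Sum>j<L. ip n u (us!j) * cnj ((y!j) b))"
  proof -
    have "(\<Sum>e<n. cnj (u e) * S e) = (\<Sum>e<n. \<Sum>j<L. cnj (u e) * (us!j) e * cnj ((y!j) b))"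
      by (simp add: S_def y_def sum_distrib_left mult.assoc)
    also have "\<dots> = (\<Sum>j<L. \<Sum>e<n. cnj (u e) * (us!j) e * cnj ((y!j) b))" by (rule sum.swap)
    also have "\<dots> = (\<Sum>j<L. ip n u (us!j) * cnj ((y!j) b))"
      by (simp add: ip_def sum_distrib_right)
    finally show ?thesis .
  qed
  finally have lhs: "prodR n (u # us) $$ (a,b) = (if a = b then 1 else 0) - 2 * S a - 2 * u a * cnj (u b)
      + 4 * u a * (\<Sum>j<L. ip n u (us!j) * cnj ((y!j) b))" .
  have y0: "cnj ((ysl n (u # us) ! 0) b) = cnj (u b) - 2 * (\<Sum>j<L. ip n u (us!j) * cnj ((y!j) b))"
    by (simp only: ysl_Cons0) (simp add: cnj_sum cnj_ip L_def y_def)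
  have "(\<Sum>j<length (u # us). ((u # us)!j) a * cnj ((ysl n (u # us) ! j) b))
     = u a * cnj ((ysl n (u # us) ! 0) b) + S a"
    unfolding length_Cons sum.lessThan_Suc_shift ysl_Cons_Suc nth_Cons_Suc
    by (simp add: S_def L_def del: ysl.simps)
  then have sum_eq: "(\<Sum>j<length (u # us). ((u # us)!j) a * cnj ((ysl n (u # us) ! j) b))
     = u a * (cnj (u b) - 2 * (\<Sum>j<L. ip n u (us!j) * cnj ((y!j) b))) + S a"
    unfolding y0 .
  show ?case unfolding lhs sum_eq by (rule aux_lin)
qed


lemma kernel_1dim:
  fixes Y Bm :: "nat \<Rightarrow> nat \<Rightarrow> complex" and x z :: "nat \<Rightarrow> complex"
  assumes inv: "\<And>a b. a < n \<Longrightarrow> b < n \<Longrightarrow> (\<Sum>j<Suc n. Y j b * Bm j a) = (if a = b then 1 else 0)"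
    and kx: "\<And>b. b < n \<Longrightarrow> (\<Sum>j<Suc n. x j * Y j b) = 0" and x0: "x 0 \<noteq> 0"
    and kz: "\<And>b. b < n \<Longrightarrow> (\<Sum>j<Suc n. z j * Y j b) = 0" and z0: "z 0 = 0"
  shows "\<And>j. j < Suc n \<Longrightarrow> z j = 0"
proof -
  define m where "m = Suc n"
  define M3 where "M3 = mat m m (\<lambda>(i,j). if i < n then Y j i else (if j = 0 then 1 else 0))"
  define Mt where "Mt = mat m m (\<lambda>(j,a). if a < n then Bm j a else x j)"
  have M3c: "M3 \<in> carrier_mat m m" and Mtc: "Mt \<in> carrier_mat m m" by (auto simp: M3_def Mt_def)
  define P where "P = M3 * Mt"
  have Pc: "P \<in> carrier_mat m m" using M3c Mtc by (simp add: P_def)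
  have Pent: "P $$ (i,a) = (if i < n then (if a < n then (if a = i then 1 else 0) else 0)
      else (if a < n then Bm 0 a else x 0))" if "i < m" "a < m" for i a
  proof -
    have "P $$ (i,a) = (\<Sum>j<m. M3 $$ (i,j) * Mt $$ (j,a))"
      unfolding P_def by (rule mult_entry[OF M3c Mtc that])
    also have "\<dots> = (\<Sum>j<Suc n. (if i < n then Y j i else (if j = 0 then 1 else 0)) * (if a < n then Bm j a else x j))"
      using that by (intro sum.cong) (auto simp: M3_def Mt_def m_def)
    also have "\<dots> = (if i < n then (if a < n then (if a = i then 1 else 0) else 0)
      else (if a < n then Bm 0 a else x 0))"
    proof (cases "i < n")
      case True
      then show ?thesis
      proof (cases "a < n")
        case True
        then show ?thesis using inv[OF True \<open>i < n\<close>] \<open>i < n\<close> by simp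
      next
        case False
        then show ?thesis using kx[OF True] True by (simp add: mult.commute)
      qed
    next
      case False
      have "(\<Sum>j<Suc n. (if j = 0 then 1 else 0) * (if a < n then Bm j a else x j)) = (if a < n then Bm 0 a else x 0)"
        by simp
      then show ?thesis using False by simp
    qed
    finally show ?thesis .
  qed
  have TPc: "transpose_mat P \<in> carrier_mat m m" using Pc by simp
  have ut: "upper_triangular (transpose_mat P)"
    unfolding upper_triangular_def
  proof (intro allI impI)
    fix i j assume ij: "i < dim_row (transpose_mat P)" "j < i"
    then have "i < m" "j < m" "j < n" using Pc by (auto simp: m_def)
    then show "transpose_mat P $$ (i,j) = 0" using Pent[of j i] ij Pc by auto
  qed
  have "0 \<notin> set (diag_mat (transpose_mat P))"
  proof
    assume "0 \<in> set (diag_mat (transpose_mat P))"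
    then obtain i where i: "i < m" "transpose_mat P $$ (i,i) = 0" using Pc by (auto simp: diag_mat_def)
    then show False using Pent[of i i] x0 Pc by (auto simp: m_def split: if_splits)
  qed
  then have "det (transpose_mat P) \<noteq> 0" using upper_triangular_imp_det_eq_0_iff[OF TPc ut] by simp
  then have "det P \<noteq> 0" using det_transpose[OF Pc] by simp
  then have dM3: "det M3 \<noteq> 0" unfolding P_def det_mult[OF M3c Mtc] by simp
  define v where "v = vec m z"
  have vc: "v \<in> carrier_vec m" by (simp add: v_def)
  have "M3 *\<^sub>v v = 0\<^sub>v m"
  proof (rule eq_vecI)
    fix i assume "i < dim_vec (0\<^sub>v m :: complex vec)"
    then have i: "i < m" by simp
    have "(M3 *\<^sub>v v) $ i = (\<Sum>j<m. M3 $$ (i,j) * z j)"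
      using i M3c by (auto simp: v_def scalar_prod_def lessThan_atLeast0 intro!: sum.cong)
    also have "\<dots> = (\<Sum>j<Suc n. (if i < n then Y j i else (if j = 0 then 1 else 0)) * z j)"
      using i by (intro sum.cong) (auto simp: M3_def m_def)
    also have "\<dots> = 0"
    proof (cases "i < n")
      case True
      then show ?thesis using kz[OF True] by (simp add: mult.commute)
    next
      case False
      then show ?thesis using z0 by simp
    qed
    finally show "(M3 *\<^sub>v v) $ i = 0\<^sub>v m $ i" using i by simp
  qed (use M3c in auto)
  then have "v = 0\<^sub>v m" using det_0_iff_vec_prod_zero[OF M3c] dM3 vc by blast
  then show "\<And>j. j < Suc n \<Longrightarrow> z j = 0"
    unfolding v_def m_def by (metis index_vec index_zero_vec(1))
qed


lemma ysl_nth: assumes "k < length us"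
  shows "(ysl n us ! k) a = (us!k) a - 2 * (\<Sum>j\<in>{Suc k..<length us}. ip n (us!j) (us!k) * (ysl n us ! j) a)"
  using assms
proof (induction us arbitrary: k)
  case Nil
  then show ?case by simp
next
  case (Cons u us)
  show ?case
  proof (cases k)
    case 0
    have "(\<Sum>j\<in>{Suc 0..<length (u # us)}. ip n ((u # us)!j) ((u # us)!0) * (ysl n (u # us) ! j) a)
        = (\<Sum>j\<in>{0..<length us}. ip n (us!j) u * (ysl n us ! j) a)"
      unfolding length_Cons sum.shift_bounds_Suc_ivl by (simp add: ysl_Cons_Suc del: ysl.simps)
    then show ?thesis unfolding 0 by (simp only: ysl_Cons0) (simp add: lessThan_atLeast0)
  next
    case (Suc k')
    then have k': "k' < length us" using Cons.prems by simp
    have "(\<Sum>j\<in>{Suc k..<length (u # us)}. ip n ((u # us)!j) ((u # us)!k) * (ysl n (u # us) ! j) a)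
        = (\<Sum>j\<in>{Suc k'..<length us}. ip n (us!j) (us!k') * (ysl n us ! j) a)"
      unfolding length_Cons Suc sum.shift_bounds_Suc_ivl by (simp add: ysl_Cons_Suc del: ysl.simps)
    then show ?thesis unfolding Suc ysl_Cons_Suc nth_Cons_Suc using Cons.IH[OF k'] by simp
  qed
qed

definition lc :: "nat \<Rightarrow> (nat \<Rightarrow> complex) \<Rightarrow> (nat \<Rightarrow> complex) list \<Rightarrow> nat \<Rightarrow> complex" where
  "lc m \<alpha> us = (\<lambda>a. \<Sum>j<m. \<alpha> j * (us!j) a)"

lemma ip_lc: "ip n (lc m \<alpha> us) (lc m \<beta> us) = (\<Sum>j<m. \<Sum>l<m. cnj (\<alpha> j) * \<beta> l * ip n (us!j) (us!l))"
proof -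
  have "ip n (lc m \<alpha> us) (lc m \<beta> us) = (\<Sum>a<n. (\<Sum>j<m. cnj (\<alpha> j) * cnj ((us!j) a)) * (\<Sum>l<m. \<beta> l * (us!l) a))"
    by (simp add: ip_def lc_def cnj_sum)
  also have "\<dots> = (\<Sum>a<n. \<Sum>j<m. \<Sum>l<m. cnj (\<alpha> j) * \<beta> l * (cnj ((us!j) a) * (us!l) a))"
    by (simp only: sum_product) (simp add: algebra_simps)
  also have "\<dots> = (\<Sum>j<m. \<Sum>a<n. \<Sum>l<m. cnj (\<alpha> j) * \<beta> l * (cnj ((us!j) a) * (us!l) a))"
    by (rule sum.swap)
  also have "\<dots> = (\<Sum>j<m. \<Sum>l<m. \<Sum>a<n. cnj (\<alpha> j) * \<beta> l * (cnj ((us!j) a) * (us!l) a))"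
    by (rule sum.cong[OF refl], rule sum.swap)
  also have "\<dots> = (\<Sum>j<m. \<Sum>l<m. cnj (\<alpha> j) * \<beta> l * ip n (us!j) (us!l))"
    by (simp only: sum_distrib_left ip_def)
  finally show ?thesis .
qed

lemma ip_zero: assumes "ip n w w = 0" "a < n" shows "w a = 0"
proof -
  have "(\<Sum>a<n. (cmod (w a))\<^sup>2) = 0" using assms(1) unfolding ip_self_real by (simp only: of_real_eq_0_iff)
  then have "(cmod (w a))\<^sup>2 = 0" using assms(2) sum_nonneg_eq_0_iff[of "{..<n}" "\<lambda>a. (cmod (w a))\<^sup>2"] by auto
  then show ?thesis by simp
qed

lemma gram_transfer:
  assumes "\<And>j l. j < m \<Longrightarrow> l < m \<Longrightarrow> ip n (us!j) (us!l) = ip n (vs!j) (vs!l)"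
    and "\<And>a. a < n \<Longrightarrow> lc m \<alpha> us a = 0" and "a < n"
  shows "lc m \<alpha> vs a = 0"
proof -
  have "ip n (lc m \<alpha> vs) (lc m \<alpha> vs) = ip n (lc m \<alpha> us) (lc m \<alpha> us)"
    unfolding ip_lc using assms(1) by simp
  also have "\<dots> = 0" by (simp add: ip_def assms(2))
  finally show ?thesis using ip_zero assms(3) by blast
qed


lemma prod_F1:
  assumes prod: "\<And>a b. a < n \<Longrightarrow> b < n \<Longrightarrow> prodR n us $$ (a,b) = (if a = b then lam else 0)"
    and ab: "a < n" "b < n"
  shows "(\<Sum>j<length us. (us!j) a * cnj ((ysl n us ! j) b)) = (if a = b then (1 - lam) / 2 else 0)"
  using prod[OF ab] prodR_entry[OF ab, of us] by (auto simp: field_simps split: if_splits)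

lemma prod_F3:
  assumes prod: "\<And>a b. a < n \<Longrightarrow> b < n \<Longrightarrow> prodR n us $$ (a,b) = (if a = b then lam else 0)"
    and b: "b < n"
  shows "(\<Sum>j<length us. (ysl n us ! j) b * ip n (us!j) v) = cnj ((1 - lam) / 2) * v b"
proof -
  let ?L = "length us"
  have "(\<Sum>j<?L. (ysl n us ! j) b * ip n (us!j) v) = (\<Sum>j<?L. \<Sum>a<n. (ysl n us ! j) b * cnj ((us!j) a) * v a)"
    by (simp add: ip_def sum_distrib_left mult.assoc)
  also have "\<dots> = (\<Sum>a<n. \<Sum>j<?L. (ysl n us ! j) b * cnj ((us!j) a) * v a)" by (rule sum.swap)
  also have "\<dots> = (\<Sum>a<n. cnj (\<Sum>j<?L. (us!j) a * cnj ((ysl n us ! j) b)) * v a)"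
    by (intro sum.cong refl) (simp add: cnj_sum sum_distrib_right sum_distrib_left mult_ac)
  also have "\<dots> = (\<Sum>a<n. cnj (if a = b then (1 - lam) / 2 else 0) * v a)"
    using prod_F1[OF prod _ b] by (intro sum.cong) auto
  also have "\<dots> = (\<Sum>a<n. if a = b then cnj ((1 - lam) / 2) * v a else 0)"
    by (intro sum.cong) auto
  also have "\<dots> = cnj ((1 - lam) / 2) * v b" using b by simp
  finally show ?thesis .
qed

definition Nm :: "nat \<Rightarrow> complex \<Rightarrow> (nat \<Rightarrow> complex) list \<Rightarrow> nat \<Rightarrow> nat \<Rightarrow> complex" where
  "Nm n cc us j k = ip n (us!j) (us!k) - cc * (if j = k then 1 else 0) - (if k < j then 2 * cc * ip n (us!j) (us!k) else 0)"

lemma sum_filter_gt: "(\<Sum>j<m. (if k < j then f j else 0)) = (\<Sum>j\<in>{Suc k..<m}. f j)"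
proof -
  have "{Suc k..<m} = {j \<in> {..<m}. k < j}" by auto
  moreover have "(\<Sum>j\<in>{j\<in>{..<m}. k<j}. f j) = (\<Sum>j<m. if k<j then f j else 0)"
    by (rule sum.inter_filter) simp
  ultimately show ?thesis by simp
qed

lemma prod_K:
  assumes prod: "\<And>a b. a < n \<Longrightarrow> b < n \<Longrightarrow> prodR n us $$ (a,b) = (if a = b then lam else 0)"
    and b: "b < n" and k: "k < length us"
  shows "(\<Sum>j<length us. Nm n (cnj ((1 - lam) / 2)) us j k * (ysl n us ! j) b) = 0"
proof -
  let ?L = "length us" and ?c = "cnj ((1 - lam) / 2)"
  let ?y = "\<lambda>j. (ysl n us ! j) b" and ?g = "\<lambda>j. ip n (us!j) (us!k)"
  have "(\<Sum>j<?L. Nm n ?c us j k * ?y j) = (\<Sum>j<?L. ?y j * ?g j - ?c * (if j = k then ?y j else 0)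
      - 2 * ?c * (if k < j then ?g j * ?y j else 0))"
    by (intro sum.cong refl) (auto simp: Nm_def algebra_simps)
  also have "\<dots> = (\<Sum>j<?L. ?y j * ?g j) - (\<Sum>j<?L. ?c * (if j = k then ?y j else 0))
      - (\<Sum>j<?L. 2 * ?c * (if k < j then ?g j * ?y j else 0))"
    by (simp only: sum_subtractf)
  also have "\<dots> = (\<Sum>j<?L. ?y j * ?g j) - ?c * (\<Sum>j<?L. (if j = k then ?y j else 0))
      - 2 * ?c * (\<Sum>j<?L. (if k < j then ?g j * ?y j else 0))"
    by (simp only: sum_distrib_left)
  also have "\<dots> = ?c * (us!k) b - ?c * ?y k - 2 * ?c * (\<Sum>j\<in>{Suc k..<?L}. ?g j * ?y j)"
    using prod_F3[OF prod b, of "us!k"] k by (simp add: sum_filter_gt)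
  also have "\<dots> = 0"
  proof -
    have e: "(us!k) b = ?y k + 2 * (\<Sum>j\<in>{Suc k..<?L}. ?g j * ?y j)"
      using ysl_nth[OF k, of n b] by (simp add: algebra_simps)
    show ?thesis unfolding e by (simp add: algebra_simps)
  qed
  finally show ?thesis .
qed

lemma prod_proportional:
  assumes prod: "\<And>a b. a < n \<Longrightarrow> b < n \<Longrightarrow> prodR n us $$ (a,b) = (if a = b then lam else 0)"
    and len: "length us = Suc n" and lam1: "lam \<noteq> 1"
    and N00: "Nm n (cnj ((1 - lam) / 2)) us 0 0 \<noteq> 0"
    and jk: "j < Suc n" "k < Suc n"
  shows "Nm n (cnj ((1 - lam) / 2)) us j k * Nm n (cnj ((1 - lam) / 2)) us 0 0
       = Nm n (cnj ((1 - lam) / 2)) us 0 k * Nm n (cnj ((1 - lam) / 2)) us j 0"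
proof -
  let ?c = "cnj ((1 - lam) / 2)"
  let ?N = "Nm n ?c us"
  have c0: "?c \<noteq> 0" using lam1 by simp
  define z where "z j = ?N j k * ?N 0 0 - ?N 0 k * ?N j 0" for j
  have "z j = 0"
  proof (rule kernel_1dim[where Y = "\<lambda>j b. (ysl n us ! j) b" and Bm = "\<lambda>j a. cnj ((us!j) a) / ?c"
        and x = "\<lambda>j. ?N j 0"])
    fix a b assume ab: "a < n" "b < n"
    have "(\<Sum>j<Suc n. (ysl n us ! j) b * (cnj ((us!j) a) / ?c))
        = (\<Sum>j<Suc n. cnj ((us!j) a * cnj ((ysl n us ! j) b))) / ?c"
      unfolding sum_divide_distrib by (intro sum.cong refl) (simp add: mult.commute)
    also have "\<dots> = cnj (\<Sum>j<Suc n. (us!j) a * cnj ((ysl n us ! j) b)) / ?c"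
      by (simp only: cnj_sum)
    also have "\<dots> = (if a = b then 1 else 0)"
      using prod_F1[OF prod ab] len c0 by simp
    finally show "(\<Sum>j<Suc n. (ysl n us ! j) b * (cnj ((us!j) a) / ?c)) = (if a = b then 1 else 0)" .
  next
    fix b assume b: "b < n"
    show "(\<Sum>j<Suc n. ?N j 0 * (ysl n us ! j) b) = 0" using prod_K[OF prod b, of 0] len by simp
  next
    show "?N 0 0 \<noteq> 0" by (rule N00)
  next
    fix b assume b: "b < n"
    have "(\<Sum>j<Suc n. z j * (ysl n us ! j) b) = ?N 0 0 * (\<Sum>j<Suc n. ?N j k * (ysl n us ! j) b)
       - ?N 0 k * (\<Sum>j<Suc n. ?N j 0 * (ysl n us ! j) b)"
      by (simp add: z_def algebra_simps sum_subtractf sum_distrib_left)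
    also have "\<dots> = 0" using prod_K[OF prod b, of 0] prod_K[OF prod b, of k] len jk by simp
    finally show "(\<Sum>j<Suc n. z j * (ysl n us ! j) b) = 0" .
  next
    show "z 0 = 0" by (simp add: z_def mult.commute)
  next
    show "j < Suc n" by (rule jk)
  qed
  then show ?thesis by (simp add: z_def)
qed


definition G0 :: "nat \<Rightarrow> nat \<Rightarrow> nat \<Rightarrow> complex" where
  "G0 r j l = (if j = l then 1 else if j < l then (1 - cnj (eta r)) / 2 else (1 - eta r) / 2)"

lemma ip_scale: "ip n (\<lambda>a. x * u a) (\<lambda>a. y * v a) = cnj x * y * ip n u v"
  by (simp add: ip_def sum_distrib_left mult_ac)

lemma ip_sym: "ip n v u = cnj (ip n u v)"
  by (simp add: cnj_ip)

lemma normal_form: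
  assumes r2: "r \<ge> 2" and len: "length us = Suc r"
    and unit: "\<And>k. k < Suc r \<Longrightarrow> ip r (us!k) (us!k) = 1"
    and prod: "\<And>a b. a < r \<Longrightarrow> b < r \<Longrightarrow> prodR r us $$ (a,b) = (if a = b then - eta r else 0)"
  shows "\<exists>vs. length vs = Suc r \<and> (\<forall>k<Suc r. Rm r (vs!k) = Rm r (us!k))
           \<and> (\<forall>j<Suc r. \<forall>l<Suc r. ip r (vs!j) (vs!l) = G0 r j l)"
proof -
  define e where "e = eta r"
  have he: "e * cnj e = 1" unfolding e_def by (rule eta_cnj')
  have e1: "e \<noteq> 1" unfolding e_def using eta_ne[OF r2] by simp
  have em1: "- e \<noteq> 1" unfolding e_def using eta_ne[OF r2] by (metis minus_equation_iff)
  have ce1: "cnj e \<noteq> 1" using e1 by (metis complex_cnj_one complex_cnj_cnj)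
  define D where "D = (1 - cnj e) / 2"
  define d where "d = (1 - e) / 2"
  have D0: "D \<noteq> 0" using ce1 by (simp add: D_def)
  have d0: "d \<noteq> 0" using e1 by (simp add: d_def)
  have cd: "cnj d = D" by (simp add: d_def D_def)
  define cc where "cc = cnj ((1 - (- e)) / 2)"
  have cc_eq: "cc = (1 + cnj e) / 2" by (simp add: cc_def)
  define N where "N = Nm r cc us"
  define g where "g j k = ip r (us!j) (us!k)" for j k
  have prod': "\<And>a b. a < r \<Longrightarrow> b < r \<Longrightarrow> prodR r us $$ (a,b) = (if a = b then - e else 0)"
    using prod unfolding e_def .
  have N00: "N 0 0 = D" using unit[of 0] by (simp add: N_def Nm_def cc_eq D_def g_def field_simps)
  have prp: "N j k * D = N 0 k * N j 0" if "j < Suc r" "k < Suc r" for j k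
    using prod_proportional[OF prod' len em1 _ that] N00 D0 unfolding N_def cc_def by auto
  have Nkk: "N k k = D" if "k < Suc r" for k
    using unit[OF that] by (simp add: N_def Nm_def cc_eq D_def field_simps)
  have Nk0: "N k 0 = - cnj e * g k 0" if "0 < k" for k
    using that by (simp add: N_def Nm_def cc_eq g_def field_simps)
  have N0k: "N 0 k = g 0 k" if "0 < k" for k
    using that by (simp add: N_def Nm_def g_def)
  have Njk: "N j k = g j k" if "j < k" for j k
    using that by (simp add: N_def Nm_def g_def)
  have eD: "- e * D = d"
  proof -
    have "- e * D = (e * cnj e - e) / 2" by (simp add: D_def algebra_simps)
    also have "\<dots> = d" using he by (simp add: d_def)
    finally show ?thesis .
  qed
  have gsym: "g k j = cnj (g j k)" for j k by (simp add: g_def cnj_ip)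
  have A: "g 0 k * cnj (g 0 k) = d * D" if "0 < k" "k < Suc r" for k
  proof -
    have "D * D = g 0 k * (- cnj e * cnj (g 0 k))"
      using prp[OF that(2) that(2)] Nkk[OF that(2)] Nk0[OF that(1)] N0k[OF that(1)] gsym[of 0 k] by simp
    then have "- e * (D * D) = (e * cnj e) * (g 0 k * cnj (g 0 k))" by (simp add: algebra_simps)
    then have "g 0 k * cnj (g 0 k) = - e * (D * D)" using he by simp
    also have "\<dots> = (- e * D) * D" by simp
    also have "- e * D = d" using eD .
    finally show ?thesis .
  qed
  have B: "g j k * D = - cnj e * (g 0 k * cnj (g 0 j))" if "0 < j" "j < k" "k < Suc r" for j k
    using prp[of j k] that Njk[OF that(2)] Nk0[OF that(1)] N0k[of k] gsym[of 0 j] by (simp add: algebra_simps)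
  define \<phi> where "\<phi> k = (if k = 0 then 1 else cnj (g 0 k) / d)" for k
  have cph0: "cnj (\<phi> k) = (if k = 0 then 1 else g 0 k / cnj d)" for k
    by (simp add: \<phi>_def)
  have cph: "cnj (\<phi> k) = (if k = 0 then 1 else g 0 k / D)" for k
    using cph0[of k] unfolding cd .
  have ph1: "cnj (\<phi> k) * \<phi> k = 1" if "k < Suc r" for k
  proof (cases "k = 0")
    case False
    have "cnj (\<phi> k) * \<phi> k = (g 0 k * cnj (g 0 k)) / (D * d)"
      using False unfolding cph by (simp add: \<phi>_def)
    also have "\<dots> = 1" using A[of k] False that D0 d0 by simp
    finally show ?thesis .
  qed (simp add: \<phi>_def)
  define vs where "vs = map (\<lambda>k a. \<phi> k * (us!k) a) [0..<Suc r]"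
  have vsk: "vs!k = (\<lambda>a. \<phi> k * (us!k) a)" if "k < Suc r" for k
    using that by (simp add: vs_def del: upt_Suc)
  have ipv: "ip r (vs!j) (vs!l) = cnj (\<phi> j) * \<phi> l * g j l" if "j < Suc r" "l < Suc r" for j l
    using that by (simp add: vsk ip_scale g_def)
  have upper: "ip r (vs!j) (vs!l) = G0 r j l" if jl: "j \<le> l" "l < Suc r" for j l
  proof -
    have j: "j < Suc r" using jl by simp
    consider "j = l" | "j = 0" "0 < l" | "0 < j" "j < l" using jl by linarith
    then show ?thesis
    proof cases
      case 1
      then show ?thesis using ipv[OF j j] ph1[OF j] unit[OF j] by (simp add: G0_def g_def)
    next
      case 2
      have "cnj (\<phi> j) * \<phi> l * g j l = (g 0 l * cnj (g 0 l)) / d"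
        using 2 unfolding cph by (simp add: \<phi>_def gsym[of 0 l] mult.commute)
      also have "\<dots> = D" using A[of l] 2 jl d0 by simp
      finally show ?thesis using ipv[OF j jl(2)] 2 by (simp add: G0_def D_def e_def)
    next
      case 3
      have gjl: "g j l = - cnj e * (g 0 l * cnj (g 0 j)) / D"
        using B[OF 3 jl(2)] D0 by (simp add: field_simps)
      have "cnj (\<phi> j) * \<phi> l * g j l
          = - cnj e * ((g 0 j * cnj (g 0 j)) * (g 0 l * cnj (g 0 l))) / (D * d * D)"
        using 3 unfolding cph by (simp add: \<phi>_def gjl field_simps)
      also have "\<dots> = - cnj e * d"
        using A[of j] A[of l] 3 jl D0 d0 by (simp add: field_simps)
      also have "\<dots> = D" using he by (simp add: d_def D_def algebra_simps)
      finally show ?thesis using ipv[OF j jl(2)] 3 by (simp add: G0_def D_def e_def)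
    qed
  qed
  have gram: "ip r (vs!j) (vs!l) = G0 r j l" if "j < Suc r" "l < Suc r" for j l
  proof (cases "j \<le> l")
    case True
    then show ?thesis using upper that by simp
  next
    case False
    have "ip r (vs!j) (vs!l) = cnj (ip r (vs!l) (vs!j))" by (rule ip_sym)
    also have "\<dots> = cnj (G0 r l j)" using upper[of l j] False that by simp
    also have "\<dots> = G0 r j l" using False by (simp add: G0_def)
    finally show ?thesis .
  qed
  have Rmv: "Rm r (vs!k) = Rm r (us!k)" if "k < Suc r" for k
  proof -
    have "\<phi> k * cnj (\<phi> k) = 1" using ph1[OF that] by (simp add: mult.commute)
    then show ?thesis using vsk[OF that] Rm_phase by metis
  qed
  have "length vs = Suc r" by (simp add: vs_def)
  then show ?thesis using gram Rmv by blast
qed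


declare sum.lessThan_Suc[simp del]

lemma sum_minus_delta: fixes m k :: nat shows "(\<Sum>j<m. (\<beta> j - (if j = k then c else 0)) * f j) = (\<Sum>j<m. \<beta> j * f j) - (if k < m then c * f k else (0::complex))"
proof -
  have "(\<Sum>j<m. (\<beta> j - (if j = k then c else 0)) * f j) = (\<Sum>j<m. \<beta> j * f j - (if j = k then c * f j else 0))"
    by (intro sum.cong) (auto simp: algebra_simps)
  then show ?thesis by (simp add: sum_subtractf sum.delta)
qed

lemma if_zero_mult: "(if P then x else 0) * (y::complex) = (if P then x * y else 0)" by simp

lemma two_families:
  assumes r2: "r \<ge> 2" and lenu: "length us = Suc r" and lenv: "length vs = Suc r"
    and gu: "\<And>j l. j < Suc r \<Longrightarrow> l < Suc r \<Longrightarrow> ip r (us!j) (us!l) = G0 r j l"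
    and gv: "\<And>j l. j < Suc r \<Longrightarrow> l < Suc r \<Longrightarrow> ip r (vs!j) (vs!l) = G0 r j l"
    and prod: "\<And>a b. a < r \<Longrightarrow> b < r \<Longrightarrow> prodR r us $$ (a,b) = (if a = b then - eta r else 0)"
  shows "\<exists>X. unitary r X \<and> (\<forall>k<Suc r. \<forall>a<r. mv r X (us!k) a = (vs!k) a)"
proof -
  define c where "c = (1 - - eta r) / 2"
  have c0: "c \<noteq> 0" unfolding c_def using eta_ne[OF r2] by (simp add: add_eq_0_iff)
  define ys where "ys = ysl r us"
  have F1: "(\<Sum>j<Suc r. (us!j) a * cnj ((ys!j) b)) = (if a = b then c else 0)" if "a < r" "b < r" for a b
    using prod_F1[OF prod that] lenu unfolding ys_def c_def by simp
  have geq: "ip r (us!j) (us!l) = ip r (vs!j) (vs!l)" if "j < Suc r" "l < Suc r" for j l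
    using gu[OF that] gv[OF that] by simp
  define X where "X = mat r r (\<lambda>(a,b). (\<Sum>j<Suc r. (vs!j) a * cnj ((ys!j) b)) / c)"
  have Xc: "X \<in> carrier_mat r r" by (simp add: X_def)
  have Xent: "X $$ (a,b) = lc (Suc r) (\<lambda>j. cnj ((ys!j) b) / c) vs a" if "a < r" "b < r" for a b
    using that by (simp add: X_def lc_def sum_divide_distrib mult.commute del: sum.lessThan_Suc)
  have lcu: "lc (Suc r) (\<lambda>j. cnj ((ys!j) b) / c) us a = (if a = b then 1 else 0)" if "a < r" "b < r" for a b
  proof -
    have "lc (Suc r) (\<lambda>j. cnj ((ys!j) b) / c) us a = (\<Sum>j<Suc r. (us!j) a * cnj ((ys!j) b)) / c"
      by (simp add: lc_def sum_divide_distrib mult.commute)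
    then show ?thesis using F1[OF that] c0 by simp
  qed
  have mvX: "mv r X (us!k) a = (vs!k) a" if k: "k < Suc r" and a: "a < r" for k a
  proof -
    define \<beta> where "\<beta> j = ip r (ys!j) (us!k)" for j
    define \<alpha> where "\<alpha> j = \<beta> j - (if j = k then c else 0)" for j
    have sumu: "(\<Sum>j<Suc r. \<beta> j * (us!j) a') = c * (us!k) a'" if a': "a' < r" for a'
    proof -
      have "(\<Sum>j<Suc r. \<beta> j * (us!j) a') = (\<Sum>j<Suc r. \<Sum>b<r. (us!j) a' * cnj ((ys!j) b) * (us!k) b)"
        by (simp add: \<beta>_def ip_def sum_distrib_left sum_distrib_right mult_ac)
      also have "\<dots> = (\<Sum>b<r. \<Sum>j<Suc r. (us!j) a' * cnj ((ys!j) b) * (us!k) b)" by (rule sum.swap)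
      also have "\<dots> = (\<Sum>b<r. (if a' = b then c else 0) * (us!k) b)"
        by (intro sum.cong refl) (simp add: F1[OF a'] sum_distrib_right[symmetric])
      also have "\<dots> = c * (us!k) a'" using a' by (simp add: if_zero_mult)
      finally show ?thesis .
    qed
    have lcz: "lc (Suc r) \<alpha> us a' = 0" if "a' < r" for a'
    proof -
      have "lc (Suc r) \<alpha> us a' = (\<Sum>j<Suc r. \<beta> j * (us!j) a') - c * (us!k) a'"
        unfolding lc_def \<alpha>_def sum_minus_delta using k by simp
      then show ?thesis using sumu[OF that] by simp
    qed
    have "lc (Suc r) \<alpha> vs a = 0" by (rule gram_transfer[OF geq lcz a])
    then have sumv: "(\<Sum>j<Suc r. \<beta> j * (vs!j) a) = c * (vs!k) a"
      unfolding lc_def \<alpha>_def sum_minus_delta using k by simp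
    have "mv r X (us!k) a = (\<Sum>b<r. (\<Sum>j<Suc r. (vs!j) a * cnj ((ys!j) b)) / c * (us!k) b)"
      using a by (simp add: mv_def X_def)
    also have "\<dots> = (\<Sum>j<Suc r. \<beta> j * (vs!j) a) / c"
    proof -
      have "(\<Sum>b<r. (\<Sum>j<Suc r. (vs!j) a * cnj ((ys!j) b)) / c * (us!k) b)
          = (\<Sum>b<r. \<Sum>j<Suc r. (vs!j) a * cnj ((ys!j) b) * (us!k) b) / c"
        by (simp add: sum_divide_distrib sum_distrib_right)
      also have "\<dots> = (\<Sum>j<Suc r. \<Sum>b<r. (vs!j) a * cnj ((ys!j) b) * (us!k) b) / c"
        by (simp only: sum.swap[of _ "{..<r}"])
      also have "\<dots> = (\<Sum>j<Suc r. \<beta> j * (vs!j) a) / c"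
        by (simp add: \<beta>_def ip_def sum_distrib_left mult_ac)
      finally show ?thesis .
    qed
    also have "\<dots> = (vs!k) a" using sumv c0 by simp
    finally show ?thesis .
  qed
  have left: "adj X * X = 1\<^sub>m r"
  proof (rule eq_matI)
    fix b b' assume bb: "b < dim_row (1\<^sub>m r :: complex mat)" "b' < dim_col (1\<^sub>m r :: complex mat)"
    then have b: "b < r" and b': "b' < r" by auto
    let ?B = "\<lambda>b j. cnj ((ys!j) b) / c"
    have "(adj X * X) $$ (b,b') = (\<Sum>a<r. adj X $$ (b,a) * X $$ (a,b'))"
      by (rule mult_entry[OF adj_carrier[OF Xc] Xc b b'])
    also have "\<dots> = ip r (lc (Suc r) (?B b) vs) (lc (Suc r) (?B b') vs)"
      unfolding ip_def using b b' by (intro sum.cong refl) (simp add: adj_index[OF Xc] Xent)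
    also have "\<dots> = ip r (lc (Suc r) (?B b) us) (lc (Suc r) (?B b') us)"
      unfolding ip_lc using geq by (intro sum.cong refl) simp
    also have "\<dots> = (\<Sum>a<r. (if a = b then 1 else 0) * (if a = b' then 1 else 0))"
      unfolding ip_def using b b' by (intro sum.cong refl) (simp add: lcu)
    also have "\<dots> = (1\<^sub>m r :: complex mat) $$ (b,b')" using b b' by simp
    finally show "(adj X * X) $$ (b,b') = (1\<^sub>m r :: complex mat) $$ (b,b')" .
  qed (use Xc in auto)
  have "X * adj X = 1\<^sub>m r"
    by (rule mat_mult_left_right_inverse[OF adj_carrier[OF Xc] Xc left])
  then have "unitary r X" using Xc by (simp add: unitary_def)
  then show ?thesis using mvX by blast
qed


lemma prodR_map: "prodR n us = foldr (*) (map (Rm n) us) (1\<^sub>m n)"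
  by (induction us) (auto simp: prodR_def)

lemma foldr_smult:
  "foldr (*) (map (\<lambda>u. z \<cdot>\<^sub>m Rm n u) us) (1\<^sub>m n) = z ^ length us \<cdot>\<^sub>m prodR n us"
proof (induction us)
  case Nil
  then show ?case by (simp add: prodR_def)
next
  case (Cons u us)
  have "foldr (*) (map (\<lambda>u. z \<cdot>\<^sub>m Rm n u) (u # us)) (1\<^sub>m n) = (z \<cdot>\<^sub>m Rm n u) * (z ^ length us \<cdot>\<^sub>m prodR n us)"
    using Cons by simp
  also have "\<dots> = z \<cdot>\<^sub>m (Rm n u * (z ^ length us \<cdot>\<^sub>m prodR n us))"
    using mult_smult_assoc_mat[OF Rm_carrier smult_carrier_mat[OF prodR_carrier]] by simp
  also have "\<dots> = z \<cdot>\<^sub>m (z ^ length us \<cdot>\<^sub>m (Rm n u * prodR n us))"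
    using mult_smult_distrib[OF Rm_carrier prodR_carrier] by simp
  also have "\<dots> = z ^ length (u # us) \<cdot>\<^sub>m prodR n (u # us)"
    by (simp add: smult_smult_mat prodR_Cons)
  finally show ?case .
qed

lemma conj_Rm_smult: assumes "unitary n X"
  shows "X * (z \<cdot>\<^sub>m Rm n u) * adj X = z \<cdot>\<^sub>m Rm n (mv n X u)"
proof -
  have XC: "X \<in> carrier_mat n n" using assms unitary_carrier by auto
  have "X * (z \<cdot>\<^sub>m Rm n u) * adj X = z \<cdot>\<^sub>m (X * Rm n u) * adj X"
    using mult_smult_distrib[OF XC Rm_carrier] by simp
  also have "\<dots> = z \<cdot>\<^sub>m (X * Rm n u * adj X)"
    using mult_smult_assoc_mat[OF mult_carrier_mat[OF XC Rm_carrier] adj_carrier[OF XC]] by simp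
  finally show ?thesis using conj_Rm[OF assms] by simp
qed

lemma tuple_family:
  assumes r2: "r \<ge> 2" and Cs: "Cs \<in> tuples r"
  shows "\<exists>us. length us = Suc r \<and> (\<forall>k<Suc r. ip r (us!k) (us!k) = 1 \<and> Cs!k = cnj (eta r) \<cdot>\<^sub>m Rm r (us!k))
     \<and> (\<forall>a<r. \<forall>b<r. prodR r us $$ (a,b) = (if a = b then - eta r else 0))"
proof -
  have len: "length Cs = Suc r" and sub: "set Cs \<subseteq> conj_class r" and pr: "foldr (*) Cs (1\<^sub>m r) = 1\<^sub>m r"
    using Cs unfolding tuples_def by auto
  define f where "f C = (SOME u. ip r u u = 1 \<and> C = cnj (eta r) \<cdot>\<^sub>m Rm r u)" for C
  have fC: "ip r (f C) (f C) = 1 \<and> C = cnj (eta r) \<cdot>\<^sub>m Rm r (f C)" if "C \<in> set Cs" for C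
  proof -
    have "\<exists>u. ip r u u = 1 \<and> C = cnj (eta r) \<cdot>\<^sub>m Rm r u" using conj_class_D[of r C] r2 sub that by auto
    then show ?thesis unfolding f_def by (rule someI_ex)
  qed
  define us where "us = map f Cs"
  have lus: "length us = Suc r" by (simp add: us_def len)
  have usk: "ip r (us!k) (us!k) = 1 \<and> Cs!k = cnj (eta r) \<cdot>\<^sub>m Rm r (us!k)" if "k < Suc r" for k
    using fC[of "Cs!k"] that len by (simp add: us_def)
  have Cs_eq: "Cs = map (\<lambda>u. cnj (eta r) \<cdot>\<^sub>m Rm r u) us"
    by (rule nth_equalityI) (use usk len lus in auto)
  have "cnj (eta r) ^ Suc r \<cdot>\<^sub>m prodR r us = 1\<^sub>m r" using pr unfolding Cs_eq foldr_smult lus .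
  then have "eta r ^ Suc r \<cdot>\<^sub>m (cnj (eta r) ^ Suc r \<cdot>\<^sub>m prodR r us) = eta r ^ Suc r \<cdot>\<^sub>m 1\<^sub>m r" by simp
  moreover have "eta r ^ Suc r * cnj (eta r) ^ Suc r = 1"
    by (metis eta_cnj' power_mult_distrib power_one)
  ultimately have P: "prodR r us = eta r ^ Suc r \<cdot>\<^sub>m 1\<^sub>m r" by (simp add: smult_smult_mat)
  have "eta r ^ Suc r = - eta r" using eta_pow[of r] r2 by simp
  then have "\<forall>a<r. \<forall>b<r. prodR r us $$ (a,b) = (if a = b then - eta r else 0)"
    using P by auto
  then show ?thesis using lus usk by blast
qed

lemma prodR_Rm_cong: assumes "length us = length vs" "\<And>k. k < length us \<Longrightarrow> Rm n (us!k) = Rm n (vs!k)"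
  shows "prodR n us = prodR n vs"
proof -
  have "map (Rm n) us = map (Rm n) vs" by (rule nth_equalityI) (use assms in auto)
  then show ?thesis unfolding prodR_map by simp
qed

lemma uniqueness:
  assumes r2: "r \<ge> 2" and Cs: "Cs \<in> tuples r" and Ds: "Ds \<in> tuples r"
  shows "(Cs, Ds) \<in> simconj r"
proof -
  obtain us where us: "length us = Suc r" "\<And>k. k<Suc r \<Longrightarrow> ip r (us!k) (us!k) = 1 \<and> Cs!k = cnj (eta r) \<cdot>\<^sub>m Rm r (us!k)"
    "\<And>a b. a<r \<Longrightarrow> b<r \<Longrightarrow> prodR r us $$ (a,b) = (if a = b then - eta r else 0)"
    using tuple_family[OF r2 Cs] by blast
  obtain us' where us': "length us' = Suc r" "\<And>k. k<Suc r \<Longrightarrow> ip r (us'!k) (us'!k) = 1 \<and> Ds!k = cnj (eta r) \<cdot>\<^sub>m Rm r (us'!k)"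
    "\<And>a b. a<r \<Longrightarrow> b<r \<Longrightarrow> prodR r us' $$ (a,b) = (if a = b then - eta r else 0)"
    using tuple_family[OF r2 Ds] by blast
  obtain vs where vs: "length vs = Suc r" "\<And>k. k<Suc r \<Longrightarrow> Rm r (vs!k) = Rm r (us!k)"
    "\<And>j l. j<Suc r \<Longrightarrow> l<Suc r \<Longrightarrow> ip r (vs!j) (vs!l) = G0 r j l"
    using normal_form[OF r2 us(1) _ us(3)] us(2) by blast
  obtain vs' where vs': "length vs' = Suc r" "\<And>k. k<Suc r \<Longrightarrow> Rm r (vs'!k) = Rm r (us'!k)"
    "\<And>j l. j<Suc r \<Longrightarrow> l<Suc r \<Longrightarrow> ip r (vs'!j) (vs'!l) = G0 r j l"
    using normal_form[OF r2 us'(1) _ us'(3)] us'(2) by blast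
  have pv: "prodR r vs = prodR r us" by (rule prodR_Rm_cong) (use vs us in auto)
  obtain X where X: "unitary r X" "\<And>k a. k<Suc r \<Longrightarrow> a<r \<Longrightarrow> mv r X (vs!k) a = (vs'!k) a"
    using two_families[OF r2 vs(1) vs'(1) vs(3) vs'(3)] us(3) unfolding pv by blast
  obtain U where U: "U \<in> SU r" "\<And>A. A \<in> carrier_mat r r \<Longrightarrow> U * A * adj U = X * A * adj X"
    using SU_adjust[OF X(1)] r2 by auto
  have lenC: "length Cs = Suc r" "length Ds = Suc r" using Cs Ds unfolding tuples_def by auto
  have "Ds!k = U * (Cs!k) * adj U" if k: "k < Suc r" for k
  proof -
    have "U * (Cs!k) * adj U = X * (cnj (eta r) \<cdot>\<^sub>m Rm r (vs!k)) * adj X"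
      using U(2)[of "Cs!k"] us(2)[OF k] vs(2)[OF k] by simp
    also have "\<dots> = cnj (eta r) \<cdot>\<^sub>m Rm r (mv r X (vs!k))" by (rule conj_Rm_smult[OF X(1)])
    also have "Rm r (mv r X (vs!k)) = Rm r (vs'!k)" using X(2)[OF k] by (intro Rm_cong) auto
    finally show ?thesis using us'(2)[OF k] vs'(2)[OF k] by simp
  qed
  then have "Ds = map (\<lambda>C. U * C * adj U) Cs" by (intro nth_equalityI) (use lenC in auto)
  then show ?thesis unfolding simconj_def using Cs Ds U(1) by blast
qed


lemma cis_int_2pi: "cis (2 * pi * real_of_int z) = 1"
  using cos_int_2pin[of z] sin_int_2pin[of z] by (simp add: complex_eq_iff)

lemma orth:
  fixes d :: int
  assumes m: "m > 0" and dm: "\<bar>d\<bar> < int m"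
  shows "(\<Sum>k<m. cis (2 * pi * real k * real_of_int d / real m)) = (if d = 0 then of_nat m else 0)"
proof (cases "d = 0")
  case True
  then show ?thesis by simp
next
  case False
  define q where "q = cis (2 * pi * real_of_int d / real m)"
  have qk: "cis (2 * pi * real k * real_of_int d / real m) = q ^ k" for k
    unfolding q_def DeMoivre by (simp add: mult_ac)
  have q1: "q \<noteq> 1"
  proof
    assume "q = 1"
    then have "cos (2 * pi * real_of_int d / real m) = 1" unfolding q_def by (metis one_complex.sel(1) cis.sel(1))
    then obtain z :: int where z: "2 * pi * real_of_int d / real m = real_of_int z * 2 * pi"
      using cos_one_2pi_int by blast
    then have "real_of_int d = real_of_int z * real m" using m by (simp add: field_simps)
    then have dz: "d = z * int m" by (metis of_int_eq_iff of_int_mult of_int_of_nat_eq)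
    show False
    proof (cases "z = 0")
      case True then show False using dz False by simp
    next
      case zF: False
      then have "\<bar>z\<bar> \<ge> 1" by simp
      then have "\<bar>z * int m\<bar> \<ge> int m" using m by (simp add: abs_mult mult_le_cancel_right1)
      then show False using dz dm by simp
    qed
  qed
  have "q ^ m = cis (real m * (2 * pi * real_of_int d / real m))" unfolding q_def DeMoivre ..
  also have "real m * (2 * pi * real_of_int d / real m) = 2 * pi * real_of_int d" using m by simp
  also have "cis (2 * pi * real_of_int d) = 1" by (rule cis_int_2pi)
  finally have qm: "q ^ m = 1" .
  have "(\<Sum>k<m. cis (2 * pi * real k * real_of_int d / real m)) = (\<Sum>k<m. q ^ k)"
    by (simp add: qk)
  also have "\<dots> = 0" using q1 qm by (simp add: sum_gp_strict)
  finally show ?thesis using False by simp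
qed

lemma cis_diff_half: "cis a - cis b = 2 * \<i> * complex_of_real (sin ((a - b) / 2)) * cis ((a + b) / 2)"
proof -
  have "cis a = cis ((a + b) / 2) * cis ((a - b) / 2)" by (simp add: cis_mult field_simps)
  moreover have "cis b = cis ((a + b) / 2) * cis (- ((a - b) / 2))" by (simp add: cis_mult field_simps)
  moreover have "cis x - cis (- x) = 2 * \<i> * complex_of_real (sin x)" for x
    by (simp add: complex_eq_iff)
  ultimately show ?thesis by (metis mult.commute right_diff_distrib)
qed

lemma cis_add_half: "cis a + cis b = 2 * complex_of_real (cos ((a - b) / 2)) * cis ((a + b) / 2)"
proof -
  have "cis a = cis ((a + b) / 2) * cis ((a - b) / 2)" by (simp add: cis_mult field_simps)
  moreover have "cis b = cis ((a + b) / 2) * cis (- ((a - b) / 2))" by (simp add: cis_mult field_simps)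
  moreover have "cis x + cis (- x) = 2 * complex_of_real (cos x)" for x
    by (simp add: complex_eq_iff)
  ultimately show ?thesis by (metis mult.commute distrib_left)
qed


declare sum.lessThan_Suc[simp del]

definition alph :: "nat \<Rightarrow> nat \<Rightarrow> real" where "alph r k = 2 * pi * real k / real (Suc r)"
definition om :: "nat \<Rightarrow> nat \<Rightarrow> complex" where "om r k = cis (alph r k)"
definition DD :: "nat \<Rightarrow> complex" where "DD r = (1 - cnj (eta r)) / 2"
definition H :: "nat \<Rightarrow> nat \<Rightarrow> complex" where "H r t = (if t = 0 then 1 else DD r * eta r ^ t)"
definition pc :: "nat \<Rightarrow> nat \<Rightarrow> complex" where
  "pc r k = (\<Sum>s<Suc r. H r s * cnj (om r k) ^ s) / of_nat (Suc r)"

lemma om_pow_cnj: "om r k ^ t * cnj (om r k) ^ s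
   = cis (2 * pi * real k * real_of_int (int t - int s) / real (Suc r))"
proof -
  have "om r k ^ t * cnj (om r k) ^ s = cis (real t * alph r k) * cis (- (real s * alph r k))"
    by (simp add: om_def DeMoivre cis_cnj)
  also have "\<dots> = cis (real t * alph r k - real s * alph r k)" by (simp add: cis_mult)
  also have "real t * alph r k - real s * alph r k = 2 * pi * real k * real_of_int (int t - int s) / real (Suc r)"
  proof -
    have "real t * alph r k - real s * alph r k = (real t - real s) * alph r k" by (simp add: algebra_simps)
    also have "\<dots> = 2 * pi * real k * (real t - real s) / real (Suc r)" by (simp add: alph_def)
    finally show ?thesis by simp
  qed
  finally show ?thesis .
qed

lemma fourier: assumes "t \<le> r"
  shows "(\<Sum>k<Suc r. pc r k * om r k ^ t) = H r t"
proof -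
  have "(\<Sum>k<Suc r. pc r k * om r k ^ t)
      = (\<Sum>k<Suc r. \<Sum>s<Suc r. H r s * (om r k ^ t * cnj (om r k) ^ s)) / of_nat (Suc r)"
  proof -
    have "pc r k * om r k ^ t = (\<Sum>s<Suc r. H r s * (om r k ^ t * cnj (om r k) ^ s)) / of_nat (Suc r)" for k
    proof -
      have "pc r k * om r k ^ t = (\<Sum>s<Suc r. H r s * cnj (om r k) ^ s) * om r k ^ t / of_nat (Suc r)"
        by (simp add: pc_def)
      also have "\<dots> = (\<Sum>s<Suc r. H r s * cnj (om r k) ^ s * om r k ^ t) / of_nat (Suc r)"
        by (simp only: sum_distrib_right)
      also have "\<dots> = (\<Sum>s<Suc r. H r s * (om r k ^ t * cnj (om r k) ^ s)) / of_nat (Suc r)"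
        by (simp only: mult_ac)
      finally show ?thesis .
    qed
    then show ?thesis by (simp only: sum_divide_distrib)
  qed
  also have "\<dots> = (\<Sum>s<Suc r. H r s * (\<Sum>k<Suc r. cis (2 * pi * real k * real_of_int (int t - int s) / real (Suc r)))) / of_nat (Suc r)"
    by (subst sum.swap) (simp add: om_pow_cnj sum_distrib_left)
  also have "\<dots> = (\<Sum>s<Suc r. H r s * (if int t - int s = 0 then of_nat (Suc r) else 0)) / of_nat (Suc r)"
  proof -
    have "(\<Sum>k<Suc r. cis (2 * pi * real k * real_of_int (int t - int s) / real (Suc r)))
        = (if int t - int s = 0 then of_nat (Suc r) else 0)" if "s < Suc r" for s
      by (rule orth) (use that assms in auto)
    then show ?thesis by (intro arg_cong[where f = "\<lambda>x. x / _"] sum.cong refl) simp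
  qed
  also have "\<dots> = H r t"
  proof -
    have m0: "1 + complex_of_nat r \<noteq> 0" using of_nat_neq_0[of r, where 'a=complex] by simp
    show ?thesis using assms m0 by (simp add: if_distrib cong: if_cong)
  qed
  finally show ?thesis .
qed


declare sum.lessThan_Suc[simp del]

definition bet :: "nat \<Rightarrow> real" where "bet r = pi / real r"

definition pr :: "nat \<Rightarrow> nat \<Rightarrow> real" where
  "pr r j = cos (bet r / 2) * sin (alph r (Suc j) / 2) / (real (Suc r) * sin ((alph r (Suc j) - bet r) / 2))"

lemma eta_bet: "eta r = cis (bet r)" by (simp add: eta_def bet_def)

lemma H_sum: "(\<Sum>s<Suc r. H r s * w ^ s) = 1 - DD r + DD r * (\<Sum>s<Suc r. (eta r * w) ^ s)"
proof -
  have "(\<Sum>s<Suc r. H r s * w ^ s) = (\<Sum>s<Suc r. DD r * (eta r * w) ^ s + (if s = 0 then 1 - DD r else 0))"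
    by (intro sum.cong refl) (auto simp: H_def power_mult_distrib algebra_simps)
  also have "\<dots> = DD r * (\<Sum>s<Suc r. (eta r * w) ^ s) + (1 - DD r)"
    by (simp add: sum.distrib sum_distrib_left)
  finally show ?thesis by simp
qed

lemma cnj_eta_inv: "cnj (eta r) = inverse (eta r)"
  using eta_cnj'[of r] by (metis inverse_unique)

lemma eta_nz: "eta r \<noteq> 0" using eta_cnj'[of r] by auto

lemma eta_Suc: assumes "r \<ge> 2" shows "eta r ^ Suc r = - eta r"
  using eta_pow[of r] assms by simp

lemma om0: "om r 0 = 1" by (simp add: om_def alph_def)

lemma pc0: assumes r2: "r \<ge> 2" shows "pc r 0 = 0"
proof -
  define e where "e = eta r"
  have e1: "e \<noteq> 1" using eta_ne[OF r2] by (simp add: e_def)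
  have e0: "e \<noteq> 0" using eta_nz by (simp add: e_def)
  have geo: "(\<Sum>s<Suc r. e ^ s) = (1 + e) / (1 - e)"
    using e1 eta_Suc[OF r2] by (simp add: sum_gp_strict e_def)
  have "(\<Sum>s<Suc r. H r s * cnj (om r 0) ^ s) = 1 - DD r + DD r * ((1 + e) / (1 - e))"
    using H_sum[of r 1] geo by (simp add: om0 e_def)
  also have "\<dots> = 0"
    using e1 e0 unfolding DD_def cnj_eta_inv unfolding e_def[symmetric] by (simp add: field_simps)
  finally show ?thesis by (simp add: pc_def)
qed

lemma om_Suc_pow: "om r k ^ Suc r = 1"
proof -
  have "real (Suc r) * alph r k = 2 * pi * real_of_int (int k)"
    unfolding alph_def by (simp del: of_nat_Suc)
  then have "om r k ^ Suc r = cis (2 * pi * real_of_int (int k))"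
    unfolding om_def DeMoivre by simp
  then show ?thesis using cis_int_2pi by simp
qed

lemma cnj_om_inv: "cnj (om r k) = inverse (om r k)"
  by (simp add: om_def cis_cnj cis_inverse)

lemma om_nz: "om r k \<noteq> 0" by (simp add: om_def)

lemma pc_closed: assumes r2: "r \<ge> 2"
  shows "pc r k = (1 + eta r) * (om r k - 1) / (2 * (om r k - eta r)) / of_nat (Suc r)"
proof -
  define e where "e = eta r"
  define w where "w = om r k"
  have e1: "e \<noteq> 1" "e \<noteq> -1" using eta_ne[OF r2] by (simp_all add: e_def)
  have e0: "e \<noteq> 0" using eta_nz by (simp add: e_def)
  have w0: "w \<noteq> 0" using om_nz by (simp add: w_def)
  have wm: "w ^ Suc r = 1" using om_Suc_pow by (simp add: w_def)
  define y where "y = e * inverse w"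
  have ym: "y ^ Suc r = - e"
    unfolding y_def power_mult_distrib power_inverse wm using eta_Suc[OF r2] by (simp add: e_def)
  have y1: "y \<noteq> 1" using ym e1 by (metis minus_equation_iff power_one)
  have we: "w - e \<noteq> 0"
  proof
    assume "w - e = 0"
    then have "y = 1" using w0 by (simp add: y_def)
    then show False using y1 by simp
  qed
  have geo: "(\<Sum>s<Suc r. y ^ s) = (1 + e) / (1 - y)"
    using y1 ym by (simp add: sum_gp_strict)
  have "(\<Sum>s<Suc r. H r s * cnj (om r k) ^ s) = 1 - DD r + DD r * ((1 + e) / (1 - y))"
    using H_sum[of r "cnj (om r k)"] geo unfolding cnj_om_inv by (simp add: y_def e_def w_def)
  also have "\<dots> = (1 + e) * (w - 1) / (2 * (w - e))"
  proof -
    have y1': "w - e * 1 \<noteq> 0" using we by simp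
    have yy: "1 - y = (w - e) / w" using w0 by (simp add: y_def field_simps)
    have DDe: "DD r = (1 - inverse e) / 2" unfolding DD_def cnj_eta_inv by (simp add: e_def)
    show ?thesis
      unfolding yy DDe using e0 w0 we by (simp add: field_simps)
  qed
  finally show ?thesis by (simp add: pc_def e_def w_def)
qed

lemma alph_bounds: assumes r2: "r \<ge> 2" and j: "j < r"
  shows "0 < alph r (Suc j) / 2" "alph r (Suc j) / 2 < pi"
    "0 < (alph r (Suc j) - bet r) / 2" "(alph r (Suc j) - bet r) / 2 < pi"
    "0 < bet r / 2" "bet r / 2 < pi / 2"
proof -
  have a2: "alph r (Suc j) / 2 = pi * (real (Suc j) / real (Suc r))" unfolding alph_def by (simp add: field_simps)
  have q: "real (Suc j) / real (Suc r) < 1" using j by simp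
  have q0: "0 < real (Suc j) / real (Suc r)" by simp
  show "0 < alph r (Suc j) / 2" unfolding a2 using q0 by simp
  show lt: "alph r (Suc j) / 2 < pi" unfolding a2 using mult_strict_left_mono[OF q pi_gt_zero] by simp
  have b0: "0 < bet r" using r2 by (simp add: bet_def)
  have "bet r < alph r (Suc j)"
  proof -
    have n1: "Suc r < 2 * r" using r2 by simp
    have n2: "2 * r \<le> 2 * r * Suc j" by simp
    have "Suc r < 2 * r * Suc j" using n1 n2 by linarith
    then have "real (Suc r) < real (2 * r * Suc j)" by (simp only: of_nat_less_iff)
    then have "real (Suc r) < 2 * real r * real (Suc j)" by (simp add: algebra_simps)
    then have "1 / real r < 2 * real (Suc j) / real (Suc r)" using r2 by (simp add: field_simps)
    then have "pi * (1 / real r) < pi * (2 * real (Suc j) / real (Suc r))"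
      by (rule mult_strict_left_mono) (rule pi_gt_zero)
    then show ?thesis by (simp add: bet_def alph_def algebra_simps)
  qed
  then show "0 < (alph r (Suc j) - bet r) / 2" by simp
  show "(alph r (Suc j) - bet r) / 2 < pi" using lt b0 by simp
  show "0 < bet r / 2" using b0 by simp
  show "bet r / 2 < pi / 2" using r2 by (simp add: bet_def field_simps)
qed

lemma pr_pos: assumes "r \<ge> 2" "j < r" shows "pr r j > 0"
proof -
  note b = alph_bounds[OF assms]
  have "cos (bet r / 2) > 0" using b(5,6) by (intro cos_gt_zero_pi) auto
  moreover have "sin (alph r (Suc j) / 2) > 0" using b(1,2) by (rule sin_gt_zero)
  moreover have "sin ((alph r (Suc j) - bet r) / 2) > 0" using b(3,4) by (rule sin_gt_zero)
  ultimately show ?thesis by (simp add: pr_def)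
qed

lemma pc_real: assumes r2: "r \<ge> 2" and j: "j < r"
  shows "pc r (Suc j) = complex_of_real (pr r j)"
proof -
  define \<alpha> where "\<alpha> = alph r (Suc j)"
  define \<beta> where "\<beta> = bet r"
  define K where "K = cis ((\<alpha> + \<beta>) / 2)"
  have K0: "K \<noteq> 0" by (simp add: K_def)
  note b = alph_bounds[OF assms]
  have S2: "sin ((\<alpha> - \<beta>) / 2) \<noteq> 0" using sin_gt_zero[OF b(3,4)] by (simp add: \<alpha>_def \<beta>_def)
  have e: "eta r = cis \<beta>" by (simp add: eta_bet \<beta>_def)
  have w: "om r (Suc j) = cis \<alpha>" by (simp add: om_def \<alpha>_def)
  have KK: "cis (\<beta> / 2) * cis (\<alpha> / 2) = K" by (simp add: K_def cis_mult add_divide_distrib add.commute)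
  have h1: "1 + eta r = 2 * complex_of_real (cos (\<beta> / 2)) * cis (\<beta> / 2)"
    using cis_add_half[of 0 \<beta>] by (simp add: e)
  have h2: "om r (Suc j) - 1 = 2 * \<i> * complex_of_real (sin (\<alpha> / 2)) * cis (\<alpha> / 2)"
    using cis_diff_half[of \<alpha> 0] by (simp add: w)
  have h3: "om r (Suc j) - eta r = 2 * \<i> * complex_of_real (sin ((\<alpha> - \<beta>) / 2)) * K"
    using cis_diff_half[of \<alpha> \<beta>] by (simp add: w e K_def)
  have num: "(1 + eta r) * (om r (Suc j) - 1) = 4 * \<i> * complex_of_real (cos (\<beta> / 2)) * complex_of_real (sin (\<alpha> / 2)) * K"
    unfolding h1 h2 KK[symmetric] by (simp add: algebra_simps)
  have "pc r (Suc j) = 4 * \<i> * complex_of_real (cos (\<beta> / 2)) * complex_of_real (sin (\<alpha> / 2)) * K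
      / (2 * (2 * \<i> * complex_of_real (sin ((\<alpha> - \<beta>) / 2)) * K)) / of_nat (Suc r)"
    unfolding pc_closed[OF r2] num h3 ..
  also have "\<dots> = complex_of_real (pr r j)"
    using K0 S2 by (simp add: pr_def \<alpha>_def \<beta>_def field_simps)
  finally show ?thesis .
qed


declare sum.lessThan_Suc[simp del] sum.op_ivl_Suc[simp del]

lemma Nm_sum:
  assumes k: "k < length us"
  shows "(\<Sum>j<length us. Nm n cc us j k * (ysl n us ! j) b)
       = (\<Sum>j<length us. (ysl n us ! j) b * ip n (us!j) (us!k)) - cc * (us!k) b"
proof -
  let ?L = "length us"
  let ?y = "\<lambda>j. (ysl n us ! j) b" and ?g = "\<lambda>j. ip n (us!j) (us!k)"
  have "(\<Sum>j<?L. Nm n cc us j k * ?y j) = (\<Sum>j<?L. ?y j * ?g j - cc * (if j = k then ?y j else 0)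
      - 2 * cc * (if k < j then ?g j * ?y j else 0))"
    by (intro sum.cong refl) (auto simp: Nm_def algebra_simps)
  also have "\<dots> = (\<Sum>j<?L. ?y j * ?g j) - (\<Sum>j<?L. cc * (if j = k then ?y j else 0))
      - (\<Sum>j<?L. 2 * cc * (if k < j then ?g j * ?y j else 0))"
    by (simp only: sum_subtractf)
  also have "\<dots> = (\<Sum>j<?L. ?y j * ?g j) - cc * (\<Sum>j<?L. (if j = k then ?y j else 0))
      - 2 * cc * (\<Sum>j<?L. (if k < j then ?g j * ?y j else 0))"
    by (simp only: sum_distrib_left)
  also have "\<dots> = (\<Sum>j<?L. ?y j * ?g j) - cc * ?y k - 2 * cc * (\<Sum>j\<in>{Suc k..<?L}. ?g j * ?y j)"
    using k by (simp add: sum_filter_gt)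
  also have "\<dots> = (\<Sum>j<?L. ?y j * ?g j) - cc * (us!k) b"
  proof -
    have e: "(us!k) b = ?y k + 2 * (\<Sum>j\<in>{Suc k..<?L}. ?g j * ?y j)"
      using ysl_nth[OF k, of n b] by (simp add: algebra_simps)
    show ?thesis unfolding e by (simp add: algebra_simps)
  qed
  finally show ?thesis .
qed

lemma tail_sum:
  assumes len: "length us = Suc r"
    and low: "\<And>j k. k < j \<Longrightarrow> j < Suc r \<Longrightarrow> ip r (us!j) (us!k) = dd"
    and kk: "k \<le> Suc r"
  shows "(\<Sum>j\<in>{k..<Suc r}. (ysl r us ! j) b) = (\<Sum>j\<in>{k..<Suc r}. (1 - 2 * dd) ^ (j - k) * (us!j) b)"
  using kk
proof (induction "Suc r - k" arbitrary: k)
  case 0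
  then show ?case by simp
next
  case (Suc i)
  then have k: "k < Suc r" by simp
  have IH: "(\<Sum>j\<in>{Suc k..<Suc r}. (ysl r us ! j) b) = (\<Sum>j\<in>{Suc k..<Suc r}. (1 - 2 * dd) ^ (j - Suc k) * (us!j) b)"
    using Suc(1)[of "Suc k"] Suc(2) k by simp
  have yk: "(ysl r us ! k) b = (us!k) b - 2 * dd * (\<Sum>j\<in>{Suc k..<Suc r}. (ysl r us ! j) b)"
  proof -
    have "(ysl r us ! k) b = (us!k) b - 2 * (\<Sum>j\<in>{Suc k..<Suc r}. ip r (us!j) (us!k) * (ysl r us ! j) b)"
      using ysl_nth[of k us r b] k len by simp
    also have "(\<Sum>j\<in>{Suc k..<Suc r}. ip r (us!j) (us!k) * (ysl r us ! j) b) = (\<Sum>j\<in>{Suc k..<Suc r}. dd * (ysl r us ! j) b)"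
      by (intro sum.cong refl) (simp add: low)
    finally show ?thesis by (simp only: sum_distrib_left[symmetric] mult.assoc)
  qed
  have "(\<Sum>j\<in>{k..<Suc r}. (ysl r us ! j) b) = (ysl r us ! k) b + (\<Sum>j\<in>{Suc k..<Suc r}. (ysl r us ! j) b)"
    by (rule sum.atLeast_Suc_lessThan[OF k])
  also have "\<dots> = (us!k) b + (1 - 2 * dd) * (\<Sum>j\<in>{Suc k..<Suc r}. (1 - 2 * dd) ^ (j - Suc k) * (us!j) b)"
    unfolding yk IH by (simp add: algebra_simps)
  also have "\<dots> = (us!k) b + (\<Sum>j\<in>{Suc k..<Suc r}. (1 - 2 * dd) ^ (j - k) * (us!j) b)"
  proof -
    have "(1 - 2 * dd) * (1 - 2 * dd) ^ (j - Suc k) = (1 - 2 * dd) ^ (j - k)" if "j \<in> {Suc k..<Suc r}" for j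
    proof -
      have "j - k = Suc (j - Suc k)" using that by auto
      then show ?thesis by simp
    qed
    then show ?thesis by (simp add: sum_distrib_left mult.assoc[symmetric])
  qed
  also have "\<dots> = (\<Sum>j\<in>{k..<Suc r}. (1 - 2 * dd) ^ (j - k) * (us!j) b)"
    using sum.atLeast_Suc_lessThan[OF k, of "\<lambda>j. (1 - 2 * dd) ^ (j - k) * (us!j) b"] by simp
  finally show ?case .
qed


declare sum.lessThan_Suc[simp del] sum.op_ivl_Suc[simp del]

lemma prod_from_gram:
  assumes r2: "r \<ge> 2" and len: "length us = Suc r"
    and gram: "\<And>j l. j < Suc r \<Longrightarrow> l < Suc r \<Longrightarrow> ip r (us!j) (us!l) = G0 r j l"
    and rel: "\<And>a. a < r \<Longrightarrow> (\<Sum>k<Suc r. eta r ^ k * (us!k) a) = 0"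
    and span: "\<And>a'. a' < r \<Longrightarrow> \<exists>\<gamma>. \<forall>a<r. (\<Sum>k<Suc r. \<gamma> k * (us!k) a) = (if a = a' then 1 else 0)"
    and ab: "a < r" "b < r"
  shows "prodR r us $$ (a,b) = (if a = b then - eta r else 0)"
proof -
  define e where "e = eta r"
  have he: "cnj e * e = 1" unfolding e_def by (rule eta_cnj)
  define dd where "dd = (1 - e) / 2"
  define D where "D = (1 - cnj e) / 2"
  define cc where "cc = (1 + cnj e) / 2"
  define ys where "ys = ysl r us"
  have low: "ip r (us!j) (us!k) = dd" if "k < j" "j < Suc r" for j k
    using gram[of j k] that by (simp add: G0_def dd_def e_def)
  have ee: "1 - 2 * dd = e" by (simp add: dd_def field_simps)
  have sy: "(\<Sum>j<Suc r. (ys!j) b') = 0" if b': "b' < r" for b'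
  proof -
    have "(\<Sum>j<Suc r. (ys!j) b') = (\<Sum>j\<in>{0..<Suc r}. (ys!j) b')" by (simp add: atLeast0LessThan)
    also have "\<dots> = (\<Sum>j\<in>{0..<Suc r}. e ^ (j - 0) * (us!j) b')"
      using tail_sum[OF len low, of 0 b'] unfolding ys_def ee by simp
    also have "\<dots> = 0" using rel[OF b'] by (simp add: atLeast0LessThan e_def)
    finally show ?thesis .
  qed
  have Nc: "Nm r cc us j k = D" if "j < Suc r" "k < Suc r" for j k
  proof -
    consider "j = k" | "j < k" | "k < j" by linarith
    then show ?thesis
    proof cases
      case 1 then show ?thesis using gram[OF that(1) that(1)] by (simp add: Nm_def G0_def cc_def D_def field_simps)
    next
      case 2 then show ?thesis using gram[OF that] by (simp add: Nm_def G0_def D_def e_def)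
    next
      case 3
      have "Nm r cc us j k = (1 - 2 * cc) * dd" using 3 low[OF 3 that(1)] by (simp add: Nm_def algebra_simps)
      also have "1 - 2 * cc = - cnj e" by (simp add: cc_def field_simps)
      also have "- cnj e * dd = (cnj e * e - cnj e) / 2" by (simp add: dd_def algebra_simps)
      also have "\<dots> = D" using he by (simp add: D_def)
      finally show ?thesis .
    qed
  qed
  have S2: "(\<Sum>j<Suc r. (ys!j) b' * ip r (us!j) (us!k)) = cc * (us!k) b'" if "b' < r" "k < Suc r" for b' k
  proof -
    have "(\<Sum>j<Suc r. Nm r cc us j k * (ys!j) b') = D * (\<Sum>j<Suc r. (ys!j) b')"
      using that by (simp add: Nc sum_distrib_left)
    also have "\<dots> = 0" using sy[OF that(1)] by simp
    finally have "(\<Sum>j<Suc r. Nm r cc us j k * (ys!j) b') = 0" .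
    then show ?thesis using Nm_sum[of k us r cc b'] that len unfolding ys_def by simp
  qed
  define Z where "Z b' a' = (\<Sum>j<Suc r. (ys!j) b' * cnj ((us!j) a'))" for b' a'
  have ZU: "(\<Sum>a'<r. Z b' a' * (us!k) a') = cc * (us!k) b'" if "b' < r" "k < Suc r" for b' k
  proof -
    have "(\<Sum>a'<r. Z b' a' * (us!k) a') = (\<Sum>a'<r. \<Sum>j<Suc r. (ys!j) b' * (cnj ((us!j) a') * (us!k) a'))"
      by (simp add: Z_def sum_distrib_right mult.assoc)
    also have "\<dots> = (\<Sum>j<Suc r. \<Sum>a'<r. (ys!j) b' * (cnj ((us!j) a') * (us!k) a'))" by (rule sum.swap)
    also have "\<dots> = (\<Sum>j<Suc r. (ys!j) b' * ip r (us!j) (us!k))"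
      by (simp add: ip_def sum_distrib_left)
    finally show ?thesis using S2[OF that] by simp
  qed
  have Zd: "Z b' a' = (if a' = b' then cc else 0)" if b': "b' < r" and a': "a' < r" for b' a'
  proof -
    obtain \<gamma> where g: "\<And>a. a < r \<Longrightarrow> (\<Sum>k<Suc r. \<gamma> k * (us!k) a) = (if a = a' then 1 else 0)"
      using span[OF a'] by blast
    have "(\<Sum>k<Suc r. \<gamma> k * (\<Sum>a<r. Z b' a * (us!k) a)) = (\<Sum>a<r. Z b' a * (\<Sum>k<Suc r. \<gamma> k * (us!k) a))"
      by (simp add: sum_distrib_left sum.swap[of _ "{..<Suc r}"] mult_ac)
    also have "\<dots> = (\<Sum>a<r. Z b' a * (if a = a' then 1 else 0))" by (intro sum.cong refl) (simp add: g)
    also have "\<dots> = Z b' a'" using a' by simp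
    finally have 1: "(\<Sum>k<Suc r. \<gamma> k * (\<Sum>a<r. Z b' a * (us!k) a)) = Z b' a'" .
    have "(\<Sum>k<Suc r. \<gamma> k * (\<Sum>a<r. Z b' a * (us!k) a)) = cc * (\<Sum>k<Suc r. \<gamma> k * (us!k) b')"
      by (simp add: ZU[OF b'] sum_distrib_left mult_ac)
    also have "\<dots> = cc * (if b' = a' then 1 else 0)" using g[OF b'] by simp
    finally show ?thesis using 1 by auto
  qed
  have "prodR r us $$ (a,b) = (if a = b then 1 else 0) - 2 * (\<Sum>j<Suc r. (us!j) a * cnj ((ys!j) b))"
    using prodR_entry[OF ab, of us] len unfolding ys_def by simp
  also have "(\<Sum>j<Suc r. (us!j) a * cnj ((ys!j) b)) = cnj (Z b a)"
    by (simp add: Z_def cnj_sum mult.commute)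
  also have "\<dots> = (if a = b then cnj cc else 0)" using Zd[OF ab(2) ab(1)] by simp
  finally have Pf: "prodR r us $$ (a,b) = (if a = b then 1 else 0) - 2 * (if a = b then cnj cc else 0)" .
  have c2: "1 - 2 * cnj cc = - eta r" unfolding cc_def e_def by (simp add: field_simps)
  show ?thesis using Pf c2 by (cases "a = b") auto
qed


declare sum.lessThan_Suc[simp del] sum.op_ivl_Suc[simp del]

definition zz :: "nat \<Rightarrow> nat \<Rightarrow> complex" where "zz r a = cnj (eta r) * om r (Suc a)"

definition fam :: "nat \<Rightarrow> (nat \<Rightarrow> complex) list" where
  "fam r = map (\<lambda>k a. complex_of_real (sqrt (pr r a)) * zz r a ^ k) [0..<Suc r]"

lemma fam_len: "length (fam r) = Suc r" by (simp add: fam_def)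

lemma fam_nth: "k < Suc r \<Longrightarrow> fam r ! k = (\<lambda>a. complex_of_real (sqrt (pr r a)) * zz r a ^ k)"
  unfolding fam_def by (simp del: upt_Suc)

lemma om_pow_gen: "om r x ^ k * cnj (om r y) ^ k
   = cis (2 * pi * real k * real_of_int (int x - int y) / real (Suc r))"
proof -
  have "om r x ^ k * cnj (om r y) ^ k = cis (real k * alph r x) * cis (- (real k * alph r y))"
    by (simp add: om_def DeMoivre cis_cnj)
  also have "\<dots> = cis (real k * alph r x - real k * alph r y)" by (simp add: cis_mult)
  also have "real k * alph r x - real k * alph r y = 2 * pi * real k * real_of_int (int x - int y) / real (Suc r)"
  proof -
    have "real k * alph r x - real k * alph r y = real k * (alph r x - alph r y)" by (simp add: algebra_simps)
    also have "\<dots> = 2 * pi * real k * (real x - real y) / real (Suc r)" by (simp add: alph_def diff_divide_distrib algebra_simps)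
    finally show ?thesis by simp
  qed
  finally show ?thesis .
qed

lemma om_pow_single: "om r x ^ k = cis (2 * pi * real k * real_of_int (int x) / real (Suc r))"
  using om_pow_gen[of r x k 0] by (simp add: om0)

lemma cnj_om_om: "cnj (om r x) * om r x = 1"
  by (simp add: om_def cis_cnj cis_mult)

lemma F_sum: assumes r2: "r \<ge> 2" and t: "t \<le> r"
  shows "(\<Sum>a<r. complex_of_real (pr r a) * om r (Suc a) ^ t) = H r t"
proof -
  have "H r t = (\<Sum>k<Suc r. pc r k * om r k ^ t)" using fourier[OF t] by simp
  also have "\<dots> = pc r 0 * om r 0 ^ t + (\<Sum>a<r. pc r (Suc a) * om r (Suc a) ^ t)"
    by (rule sum.lessThan_Suc_shift)
  also have "\<dots> = (\<Sum>a<r. complex_of_real (pr r a) * om r (Suc a) ^ t)"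
    using pc0[OF r2] pc_real[OF r2] by simp
  finally show ?thesis by simp
qed

lemma fam_gram_upper: assumes r2: "r \<ge> 2" and jl: "j \<le> l" "l < Suc r"
  shows "ip r (fam r ! j) (fam r ! l) = G0 r j l"
proof -
  define t where "t = l - j"
  have l: "l = j + t" using jl by (simp add: t_def)
  have tr: "t \<le> r" using jl by (simp add: t_def)
  define e where "e = eta r"
  have he: "cnj e * e = 1" unfolding e_def by (rule eta_cnj)
  have zu: "cnj (zz r a) * zz r a = 1" for a
    using he cnj_om_om[of r "Suc a"] by (simp add: zz_def e_def[symmetric] algebra_simps)
  have "ip r (fam r ! j) (fam r ! l) = (\<Sum>a<r. complex_of_real (pr r a) * (cnj (zz r a) ^ j * zz r a ^ l))"
  proof -
    have "cnj (complex_of_real (sqrt (pr r a))) * complex_of_real (sqrt (pr r a)) = complex_of_real (pr r a)" if "a < r" for a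
      using pr_pos[OF r2 that] by (simp flip: of_real_mult)
    then show ?thesis using jl unfolding ip_def
      by (simp add: fam_nth) (intro sum.cong refl, auto simp: algebra_simps)
  qed
  also have "\<dots> = (\<Sum>a<r. complex_of_real (pr r a) * zz r a ^ t)"
  proof (intro sum.cong refl)
    fix a
    have "cnj (zz r a) ^ j * zz r a ^ l = (cnj (zz r a) * zz r a) ^ j * zz r a ^ t"
      unfolding l power_add power_mult_distrib by (simp add: mult_ac)
    then show "complex_of_real (pr r a) * (cnj (zz r a) ^ j * zz r a ^ l) = complex_of_real (pr r a) * zz r a ^ t"
      using zu by simp
  qed
  also have "\<dots> = cnj e ^ t * (\<Sum>a<r. complex_of_real (pr r a) * om r (Suc a) ^ t)"
    by (simp add: zz_def e_def power_mult_distrib sum_distrib_left mult_ac)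
  also have "\<dots> = cnj e ^ t * H r t" using F_sum[OF r2 tr] by simp
  also have "\<dots> = G0 r j l"
  proof (cases "t = 0")
    case True
    then show ?thesis using l by (simp add: H_def G0_def)
  next
    case False
    have "cnj e ^ t * e ^ t = 1" using he by (metis power_mult_distrib power_one)
    then show ?thesis using False l
      by (simp add: H_def G0_def DD_def e_def[symmetric] mult_ac)
  qed
  finally show ?thesis .
qed

lemma fam_gram: assumes r2: "r \<ge> 2" and jl: "j < Suc r" "l < Suc r"
  shows "ip r (fam r ! j) (fam r ! l) = G0 r j l"
proof (cases "j \<le> l")
  case True
  show ?thesis by (rule fam_gram_upper[OF r2 True jl(2)])
next
  case False
  have "ip r (fam r ! j) (fam r ! l) = cnj (ip r (fam r ! l) (fam r ! j))" by (rule ip_sym)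
  also have "\<dots> = cnj (G0 r l j)" using fam_gram_upper[OF r2 _ jl(1), of l] False by simp
  also have "\<dots> = G0 r j l" using False by (simp add: G0_def)
  finally show ?thesis .
qed


declare sum.lessThan_Suc[simp del] sum.op_ivl_Suc[simp del]

lemma zz_eta: "eta r * zz r a = om r (Suc a)"
  using eta_cnj'[of r] by (simp add: zz_def mult.assoc[symmetric])

lemma fam_rel: assumes r2: "r \<ge> 2" and a: "a < r"
  shows "(\<Sum>k<Suc r. eta r ^ k * (fam r ! k) a) = 0"
proof -
  have "(\<Sum>k<Suc r. eta r ^ k * (fam r ! k) a) = complex_of_real (sqrt (pr r a)) * (\<Sum>k<Suc r. om r (Suc a) ^ k)"
    by (simp add: fam_nth sum_distrib_left zz_eta[symmetric] power_mult_distrib mult_ac)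
  also have "(\<Sum>k<Suc r. om r (Suc a) ^ k) = (\<Sum>k<Suc r. cis (2 * pi * real k * real_of_int (int (Suc a)) / real (Suc r)))"
    by (simp add: om_pow_single)
  also have "\<dots> = 0" using orth[of "Suc r" "int (Suc a)"] a by simp
  finally show ?thesis by simp
qed

lemma fam_span: assumes r2: "r \<ge> 2" and a': "a' < r"
  shows "\<exists>\<gamma>. \<forall>a<r. (\<Sum>k<Suc r. \<gamma> k * (fam r ! k) a) = (if a = a' then 1 else 0)"
proof -
  define sq where "sq a = complex_of_real (sqrt (pr r a))" for a
  have sq0: "sq a' \<noteq> 0" using pr_pos[OF r2 a'] by (simp add: sq_def)
  define \<gamma> where "\<gamma> k = cnj (zz r a') ^ k / (of_nat (Suc r) * sq a')" for k
  have "(\<Sum>k<Suc r. \<gamma> k * (fam r ! k) a) = (if a = a' then 1 else 0)" if a: "a < r" for a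
  proof -
    have trm: "zz r a ^ k * cnj (zz r a') ^ k = cis (2 * pi * real k * real_of_int (int (Suc a) - int (Suc a')) / real (Suc r))" for k
    proof -
      have "zz r a ^ k * cnj (zz r a') ^ k = (cnj (eta r) * eta r) ^ k * (om r (Suc a) ^ k * cnj (om r (Suc a')) ^ k)"
        by (simp add: zz_def power_mult_distrib mult_ac)
      then show ?thesis using eta_cnj[of r] by (simp add: om_pow_gen)
    qed
    have "(\<Sum>k<Suc r. \<gamma> k * (fam r ! k) a) = sq a / (of_nat (Suc r) * sq a') * (\<Sum>k<Suc r. zz r a ^ k * cnj (zz r a') ^ k)"
      by (simp add: \<gamma>_def fam_nth sq_def sum_distrib_left mult_ac)
    also have "(\<Sum>k<Suc r. zz r a ^ k * cnj (zz r a') ^ k) = (if int (Suc a) - int (Suc a') = 0 then of_nat (Suc r) else 0)"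
      unfolding trm by (rule orth) (use a a' in auto)
    also have "sq a / (of_nat (Suc r) * sq a') * \<dots> = (if a = a' then 1 else 0)"
    proof (cases "a = a'")
      case True
      have "(of_nat (Suc r) :: complex) \<noteq> 0" by (metis of_nat_neq_0)
      then show ?thesis using True sq0 by (simp add: field_simps del: of_nat_Suc)
    qed simp
    finally show ?thesis .
  qed
  then show ?thesis by blast
qed

lemma fam_prod: assumes r2: "r \<ge> 2"
  shows "prodR r (fam r) = (- eta r) \<cdot>\<^sub>m 1\<^sub>m r"
proof (rule eq_matI)
  fix a b assume ab: "a < dim_row ((- eta r) \<cdot>\<^sub>m 1\<^sub>m r :: complex mat)" "b < dim_col ((- eta r) \<cdot>\<^sub>m 1\<^sub>m r :: complex mat)"
  then have a: "a < r" and b: "b < r" by auto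
  have "prodR r (fam r) $$ (a,b) = (if a = b then - eta r else 0)"
    by (rule prod_from_gram[OF r2 fam_len fam_gram[OF r2] fam_rel[OF r2] fam_span[OF r2] a b])
  then show "prodR r (fam r) $$ (a,b) = ((- eta r) \<cdot>\<^sub>m 1\<^sub>m r) $$ (a,b)" using a b by simp
qed (auto simp: carrier_matD(1)[OF prodR_carrier] carrier_matD(2)[OF prodR_carrier])

lemma existence: assumes r2: "r \<ge> 2" shows "tuples r \<noteq> {}"
proof -
  define Cs where "Cs = map (\<lambda>u. cnj (eta r) \<cdot>\<^sub>m Rm r u) (fam r)"
  have "length Cs = r + 1" by (simp add: Cs_def fam_len)
  moreover have "set Cs \<subseteq> conj_class r"
  proof
    fix C assume "C \<in> set Cs"
    then obtain k where k: "k < Suc r" "C = cnj (eta r) \<cdot>\<^sub>m Rm r (fam r ! k)"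
      unfolding Cs_def by (auto simp: in_set_conv_nth fam_len)
    have "ip r (fam r ! k) (fam r ! k) = 1" using fam_gram[OF r2 k(1) k(1)] by (simp add: G0_def)
    then show "C \<in> conj_class r" using conj_class_I[of r] r2 k(2) by simp
  qed
  moreover have "foldr (*) Cs (1\<^sub>m r) = 1\<^sub>m r"
  proof -
    have "foldr (*) Cs (1\<^sub>m r) = cnj (eta r) ^ Suc r \<cdot>\<^sub>m ((- eta r) \<cdot>\<^sub>m 1\<^sub>m r)"
      unfolding Cs_def foldr_smult fam_len fam_prod[OF r2] ..
    also have "cnj (eta r) ^ Suc r = - cnj (eta r)"
      using eta_Suc[OF r2] by (metis complex_cnj_power complex_cnj_minus)
    also have "- cnj (eta r) \<cdot>\<^sub>m ((- eta r) \<cdot>\<^sub>m 1\<^sub>m r) = (cnj (eta r) * eta r) \<cdot>\<^sub>m (1\<^sub>m r :: complex mat)"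
      by (simp add: smult_smult_mat)
    also have "\<dots> = 1\<^sub>m r" using eta_cnj[of r] by simp
    finally show ?thesis .
  qed
  ultimately have "Cs \<in> tuples r" unfolding tuples_def by blast
  then show ?thesis by blast
qed

theorem proposition9p3:
  fixes r :: nat
  assumes "r \<ge> 2"
  shows "\<exists>x. moduli0 r = {x}"
proof -
  have cls: "simconj r `` {Cs} = tuples r" if "Cs \<in> tuples r" for Cs
  proof
    show "simconj r `` {Cs} \<subseteq> tuples r" unfolding simconj_def by auto
    show "tuples r \<subseteq> simconj r `` {Cs}" using uniqueness[OF assms that] by auto
  qed
  obtain C0 where C0: "C0 \<in> tuples r" using existence[OF assms] by blast
  have "moduli0 r = {tuples r}"
    unfolding moduli0_def quotient_def using cls C0 by auto
  then show ?thesis by blast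
qed


end
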